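(* Let $\mathcal{G}=(V,E)$ be a DAG and let $i,j\in V$ be distinct and $K\subseteq V\setminus\{i,j\}$ such that $K$ does not $d$-separate $i$ from $j$. Then $\phi_\mathcal{G}^\ast(\det\Sigma_{\{i\}\cup K,\{j\}\cup K})$ is a monomial if and only if there is a unique trek system from $\{i\}\cup K$ to $\{j\}\cup K$ with no sided intersection.
   Context: For a DAG $\mathcal{G}=(V,E)$ on $V=[n]$, let $\Lambda=(\lambda_{uv})$ with $\lambda_{uv}$ a variable if $u\to v\in E$ and $0$ otherwise, $\Omega=\mathrm{diag}(\omega_1,\dots,\omega_n)$; $\phi_\mathcal{G}^\ast$ is the ring homomorphism from $\mathbb{R}[\sigma_{uv}]$ to $\mathbb{R}[\lambda,\omega]$ sending $\sigma_{uv}$ to the $(u,v)$ entry of $(I-\Lambda)^{-T}\Omega(I-\Lambda)^{-1}$; $\Sigma_{A,B}$ is the submatrix with rows $A$ and columns $B$. A trek from $u$ to $v$ is a pair $(P_L,P_R)$ of directed paths (possibly of length zero) both starting at a common node $s$ (the top), with $P_L$ ending at $u$ (leftmost node) and $P_R$ ending at $v$ (rightmost node). For sets $A,B$ of $k$ nodes, a trek system from $A$ to $B$ is a set of $k$ treks whose leftmost nodes exhaust $A$ and whose rightmost nodes exhaust $B$. It has no sided intersection if the left parts $P_L$ of its treks are pairwise node-disjoint and the right parts $P_R$ are pairwise node-disjoint. $d$-separation is the standard criterion. *)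

theory Defs
  imports "Jordan_Normal_Form.Determinant" "Jordan_Normal_Form.DL_Submatrix"
    "HOL-Library.Poly_Mapping"
begin

text \<open>Graphs: nodes are 0..<n, edges E a set of pairs (u,v) meaning u -> v.\<close>

definition is_dag :: "nat \<Rightarrow> (nat \<times> nat) set \<Rightarrow> bool" where
  "is_dag n E \<longleftrightarrow> E \<subseteq> {..<n} \<times> {..<n} \<and> acyclic E"

text \<open>Polynomial ring R[lambda, omega]: variables and polynomials as
 finitely supported maps from monomials (exponent vectors) to real coefficients.\<close>

datatype var = Lam nat nat | Om nat

type_synonym rpoly = "(var \<Rightarrow>\<^sub>0 nat) \<Rightarrow>\<^sub>0 real"

definition Var :: "var \<Rightarrow> rpoly" where
  "Var x = Poly_Mapping.single (Poly_Mapping.single x 1) 1"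

definition is_monomial :: "rpoly \<Rightarrow> bool" where
  "is_monomial p \<longleftrightarrow> (\<exists>m c. c \<noteq> 0 \<and> p = Poly_Mapping.single m c)"

definition Lambda_mat :: "nat \<Rightarrow> (nat \<times> nat) set \<Rightarrow> rpoly mat" where
  "Lambda_mat n E = mat n n (\<lambda>(u,v). if (u,v) \<in> E then Var (Lam u v) else 0)"

definition Omega_mat :: "nat \<Rightarrow> rpoly mat" where
  "Omega_mat n = mat n n (\<lambda>(u,v). if u = v then Var (Om u) else 0)"

definition mat_inverse :: "nat \<Rightarrow> 'a::comm_ring_1 mat \<Rightarrow> 'a mat" where
  "mat_inverse n M = (THE N. N \<in> carrier_mat n n \<and> N * M = 1\<^sub>m n \<and> M * N = 1\<^sub>m n)"

text \<open>The matrix with (u,v) entry phi*(sigma_uv) = ((I-Lambda)^{-T} Omega (I-Lambda)^{-1})_{uv}.\<close>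
definition phi_Sigma :: "nat \<Rightarrow> (nat \<times> nat) set \<Rightarrow> rpoly mat" where
  "phi_Sigma n E =
     (let L = mat_inverse n (1\<^sub>m n - Lambda_mat n E)
      in transpose_mat L * Omega_mat n * L)"

definition dpath :: "(nat \<times> nat) set \<Rightarrow> nat list \<Rightarrow> bool" where
  "dpath E p \<longleftrightarrow> p \<noteq> [] \<and> (\<forall>k. Suc k < length p \<longrightarrow> (p ! k, p ! Suc k) \<in> E)"

text \<open>A trek (P_L, P_R): both paths start at the common top; P_L ends at the
 leftmost node, P_R at the rightmost node.\<close>
definition is_trek :: "(nat \<times> nat) set \<Rightarrow> nat list \<times> nat list \<Rightarrow> bool" where
  "is_trek E t \<longleftrightarrow> dpath E (fst t) \<and> dpath E (snd t) \<and> hd (fst t) = hd (snd t)"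

definition left_node :: "nat list \<times> nat list \<Rightarrow> nat" where
  "left_node t = last (fst t)"

definition right_node :: "nat list \<times> nat list \<Rightarrow> nat" where
  "right_node t = last (snd t)"

definition trek_system ::
  "(nat \<times> nat) set \<Rightarrow> nat set \<Rightarrow> nat set \<Rightarrow> (nat list \<times> nat list) set \<Rightarrow> bool" where
  "trek_system E A B T \<longleftrightarrow>
     finite T \<and> card T = card A \<and> (\<forall>t\<in>T. is_trek E t) \<and>
     left_node ` T = A \<and> right_node ` T = B"

definition no_sided_intersection :: "(nat list \<times> nat list) set \<Rightarrow> bool" where
  "no_sided_intersection T \<longleftrightarrow>
     (\<forall>t\<in>T. \<forall>t'\<in>T. t \<noteq> t' \<longrightarrow>
        set (fst t) \<inter> set (fst t') = {} \<and> set (snd t) \<inter> set (snd t') = {})"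

definition skel_path :: "(nat \<times> nat) set \<Rightarrow> nat list \<Rightarrow> bool" where
  "skel_path E p \<longleftrightarrow> p \<noteq> [] \<and> distinct p \<and>
     (\<forall>k. Suc k < length p \<longrightarrow> (p ! k, p ! Suc k) \<in> E \<or> (p ! Suc k, p ! k) \<in> E)"

definition collider_at :: "(nat \<times> nat) set \<Rightarrow> nat list \<Rightarrow> nat \<Rightarrow> bool" where
  "collider_at E p k \<longleftrightarrow> (p ! (k - 1), p ! k) \<in> E \<and> (p ! Suc k, p ! k) \<in> E"

definition d_connecting :: "(nat \<times> nat) set \<Rightarrow> nat set \<Rightarrow> nat list \<Rightarrow> bool" where
  "d_connecting E K p \<longleftrightarrow> skel_path E p \<and>
     (\<forall>k. 0 < k \<and> Suc k < length p \<longrightarrow>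
        (if collider_at E p k then (\<exists>d\<in>K. (p ! k, d) \<in> E\<^sup>*) else p ! k \<notin> K))"

definition d_separates :: "(nat \<times> nat) set \<Rightarrow> nat set \<Rightarrow> nat \<Rightarrow> nat \<Rightarrow> bool" where
  "d_separates E K i j \<longleftrightarrow>
     \<not> (\<exists>p. d_connecting E K p \<and> hd p = i \<and> last p = j)"

end

theory Submission
  imports Defs "HOL-Library.Nat_Bijection"
begin

section \<open>Polynomial preliminaries\<close>

abbreviation pkeys :: "('a \<Rightarrow>\<^sub>0 'b::zero) \<Rightarrow> 'a set" where "pkeys \<equiv> Poly_Mapping.keys"
abbreviation plookup :: "('a \<Rightarrow>\<^sub>0 'b::zero) \<Rightarrow> 'a \<Rightarrow> 'b" where "plookup \<equiv> Poly_Mapping.lookup"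

fun var_enc :: "var \<Rightarrow> nat" where
  "var_enc (Lam a b) = prod_encode (0, prod_encode (a, b))"
| "var_enc (Om a) = prod_encode (1, a)"

lemma inj_var_enc: "inj var_enc"
proof (rule injI)
  fix x y assume "var_enc x = var_enc y"
  then show "x = y"
    by (cases x; cases y) (auto simp: prod_encode_eq)
qed

instantiation var :: linorder
begin
definition less_eq_var :: "var \<Rightarrow> var \<Rightarrow> bool" where "less_eq_var x y \<longleftrightarrow> var_enc x \<le> var_enc y"
definition less_var :: "var \<Rightarrow> var \<Rightarrow> bool" where "less_var x y \<longleftrightarrow> var_enc x < var_enc y"
instance
proof
  fix x y z :: var
  show "(x < y) = (x \<le> y \<and> \<not> y \<le> x)" by (auto simp: less_eq_var_def less_var_def)
  show "x \<le> x" by (simp add: less_eq_var_def)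
  show "x \<le> y \<Longrightarrow> y \<le> z \<Longrightarrow> x \<le> z" by (simp add: less_eq_var_def)
  show "x \<le> y \<Longrightarrow> y \<le> x \<Longrightarrow> x = y" using inj_var_enc by (simp add: less_eq_var_def inj_eq)
  show "x \<le> y \<or> y \<le> x" by (auto simp: less_eq_var_def)
qed
end

lemma lookup_mult_unique:
  fixes f g :: rpoly
  assumes "\<And>l q. l \<in> pkeys f \<Longrightarrow> q \<in> pkeys g \<Longrightarrow> l + q = a + b \<Longrightarrow> l = a \<and> q = b"
  shows "plookup (f * g) (a + b) = plookup f a * plookup g b"
proof -
  have "\<And>l. plookup f l * Sum_any (\<lambda>q. plookup g q when a + b = l + q) =
      (if l = a then plookup f a * plookup g b else 0)"
  proof -
    fix l
    show "plookup f l * Sum_any (\<lambda>q. plookup g q when a + b = l + q) =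
      (if l = a then plookup f a * plookup g b else 0)"
    proof (cases "l = a")
      case True
      then have "(\<lambda>q. plookup g q when a + b = l + q) = (\<lambda>q. plookup g q when q = b)"
        by (auto simp: when_def)
      then show ?thesis using True by simp
    next
      case False
      show ?thesis
      proof (cases "plookup f l = 0")
        case True then show ?thesis using False by simp
      next
        case nz: False
        have z: "(\<lambda>q. plookup g q when a + b = l + q) = (\<lambda>q. 0)"
        proof
          fix q show "(plookup g q when a + b = l + q) = 0"
            by (cases "plookup g q = 0") (use assms[of l q] nz False in \<open>auto simp: when_def in_keys_iff\<close>)
        qed
        have "Sum_any (\<lambda>q. plookup g q when a + b = l + q) = 0"
          by (simp only: z Sum_any.neutral)
        then show ?thesis using False by simp
      qed
    qed
  qed
  then show ?thesis
    by (simp add: lookup_mult Sum_any.delta)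
qed

lemma keys_mult_card_ge2:
  fixes f g :: rpoly
  assumes "g \<noteq> 0" and "2 \<le> card (pkeys f)"
  shows "2 \<le> card (pkeys (f * g))"
proof -
  let ?F = "pkeys f" and ?G = "pkeys g"
  have fF: "finite ?F" "finite ?G" by auto
  have neF: "?F \<noteq> {}" using assms(2) by (metis card.empty not_numeral_le_zero)
  have neG: "?G \<noteq> {}" using assms(1) by simp
  have MinMax: "Min ?F < Max ?F"
  proof -
    obtain x where x: "x \<in> ?F" using neF by (metis ex_in_conv)
    have "card (?F - {x}) \<ge> 1" using assms(2) x fF by (simp add: card_Diff_singleton)
    then obtain y where "y \<in> ?F - {x}" by (metis card.empty ex_in_conv not_one_le_zero)
    then have "x \<in> ?F" "y \<in> ?F" "x \<noteq> y" using x by auto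
    moreover have "Min ?F \<le> x" "x \<le> Max ?F" "Min ?F \<le> y" "y \<le> Max ?F"
      using fF \<open>x \<in> ?F\<close> \<open>y \<in> ?F\<close> by auto
    ultimately show ?thesis
      by (metis dual_order.antisym dual_order.trans not_le)
  qed
  have k1: "plookup (f * g) (Max ?F + Max ?G) = plookup f (Max ?F) * plookup g (Max ?G)"
  proof (rule lookup_mult_unique)
    fix l q assume l: "l \<in> ?F" and q: "q \<in> ?G" and e: "l + q = Max ?F + Max ?G"
    have "l \<le> Max ?F" "q \<le> Max ?G" using l q fF by auto
    then show "l = Max ?F \<and> q = Max ?G" using e
      by (metis add_le_less_mono add_less_le_mono order.not_eq_order_implies_strict order_less_irrefl)
  qed
  have k2: "plookup (f * g) (Min ?F + Min ?G) = plookup f (Min ?F) * plookup g (Min ?G)"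
  proof (rule lookup_mult_unique)
    fix l q assume l: "l \<in> ?F" and q: "q \<in> ?G" and e: "l + q = Min ?F + Min ?G"
    have "Min ?F \<le> l" "Min ?G \<le> q" using l q fF by auto
    then show "l = Min ?F \<and> q = Min ?G" using e
      by (metis add_le_less_mono add_less_le_mono order.not_eq_order_implies_strict order_less_irrefl)
  qed
  have mem: "Max ?F \<in> ?F" "Max ?G \<in> ?G" "Min ?F \<in> ?F" "Min ?G \<in> ?G"
    using fF neF neG by auto
  have in1: "Max ?F + Max ?G \<in> pkeys (f * g)"
    using k1 mem by (simp add: in_keys_iff)
  have in2: "Min ?F + Min ?G \<in> pkeys (f * g)"
    using k2 mem by (simp add: in_keys_iff)
  have ne: "Min ?F + Min ?G \<noteq> Max ?F + Max ?G"
  proof -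
    have "Min ?G \<le> Max ?G" using fF neG by simp
    then have "Min ?F + Min ?G < Max ?F + Max ?G" by (rule add_less_le_mono[OF MinMax])
    then show ?thesis by simp
  qed
  have "{Min ?F + Min ?G, Max ?F + Max ?G} \<subseteq> pkeys (f * g)" using in1 in2 by auto
  then have "card {Min ?F + Min ?G, Max ?F + Max ?G} \<le> card (pkeys (f * g))"
    by (intro card_mono) auto
  then show ?thesis using ne by simp
qed

lemma keys_card1_single:
  fixes f :: rpoly
  assumes "card (pkeys f) = 1"
  obtains m c where "c \<noteq> 0" "f = Poly_Mapping.single m c"
proof -
  obtain m where km: "pkeys f = {m}" using assms card_1_singletonE by blast
  have "f = Poly_Mapping.single m (plookup f m)"
    by (rule poly_mapping_eqI) (metis km in_keys_iff lookup_single_eq lookup_single_not_eq singletonI singleton_iff)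
  moreover have "plookup f m \<noteq> 0" using km by (simp add: in_keys_iff[symmetric])
  ultimately show ?thesis using that by blast
qed

lemma card_keys_eq_0: "card (pkeys (f::rpoly)) = 0 \<longleftrightarrow> f = 0"
  by (simp add: card_eq_0_iff)

lemma is_monomial_card: "is_monomial p \<longleftrightarrow> card (pkeys p) = 1"
proof
  assume "is_monomial p" then show "card (pkeys p) = 1" by (auto simp: is_monomial_def)
next
  assume "card (pkeys p) = 1" then show "is_monomial p"
    by (metis is_monomial_def keys_card1_single)
qed

lemma card_keys_mult:
  fixes f g :: rpoly
  shows "card (pkeys (f * g)) = 0 \<longleftrightarrow> card (pkeys f) = 0 \<or> card (pkeys g) = 0"
    and "card (pkeys (f * g)) = 1 \<longleftrightarrow> card (pkeys f) = 1 \<and> card (pkeys g) = 1"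
proof -
  have "f * g = 0 \<longleftrightarrow> f = 0 \<or> g = 0" by simp
  then show "card (pkeys (f * g)) = 0 \<longleftrightarrow> card (pkeys f) = 0 \<or> card (pkeys g) = 0"
    by simp
  show "card (pkeys (f * g)) = 1 \<longleftrightarrow> card (pkeys f) = 1 \<and> card (pkeys g) = 1"
  proof
    assume a: "card (pkeys (f * g)) = 1"
    then have nz: "f \<noteq> 0" "g \<noteq> 0" by auto
    have "\<not> 2 \<le> card (pkeys f)" using keys_mult_card_ge2[OF nz(2), of f] a by auto
    moreover have "\<not> 2 \<le> card (pkeys g)" using keys_mult_card_ge2[OF nz(1), of g] a
      by (auto simp: mult.commute)
    moreover have "card (pkeys f) \<noteq> 0" "card (pkeys g) \<noteq> 0"
      using nz card_keys_eq_0 by blast+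
    ultimately show "card (pkeys f) = 1 \<and> card (pkeys g) = 1" by linarith
  next
    assume "card (pkeys f) = 1 \<and> card (pkeys g) = 1"
    then obtain a c b d where "c \<noteq> 0" "d \<noteq> 0" "f = Poly_Mapping.single a c" "g = Poly_Mapping.single b d"
      by (metis keys_card1_single)
    then show "card (pkeys (f * g)) = 1" by (simp add: mult_single)
  qed
qed

section \<open>Paths and the path matrix\<close>

definition paths :: "(nat \<times> nat) set \<Rightarrow> nat \<Rightarrow> nat \<Rightarrow> nat list set" where
  "paths E u v = {p. dpath E p \<and> hd p = u \<and> last p = v}"

fun pm :: "nat list \<Rightarrow> rpoly" where
  "pm (x # y # r) = Var (Lam x y) * pm (y # r)"
| "pm _ = 1"

definition Lp :: "(nat \<times> nat) set \<Rightarrow> nat \<Rightarrow> nat \<Rightarrow> rpoly" where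
  "Lp E u v = (\<Sum>p\<in>paths E u v. pm p)"

lemma dpath_single[simp]: "dpath E [x]"
  by (simp add: dpath_def)

lemma dpath_Cons2[simp]: "dpath E (x # y # r) \<longleftrightarrow> (x, y) \<in> E \<and> dpath E (y # r)"
proof
  assume a: "dpath E (x # y # r)"
  then have a': "\<And>k. Suc k < length (x # y # r) \<Longrightarrow> ((x # y # r) ! k, (x # y # r) ! Suc k) \<in> E"
    unfolding dpath_def by blast
  have "(x, y) \<in> E" using a'[of 0] by simp
  moreover have "dpath E (y # r)" unfolding dpath_def
  proof (intro conjI allI impI)
    fix k assume "Suc k < length (y # r)"
    then show "((y # r) ! k, (y # r) ! Suc k) \<in> E" using a'[of "Suc k"] by simp
  qed simp
  ultimately show "(x, y) \<in> E \<and> dpath E (y # r)" by simp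
next
  assume a: "(x, y) \<in> E \<and> dpath E (y # r)"
  then have a': "\<And>k. Suc k < length (y # r) \<Longrightarrow> ((y # r) ! k, (y # r) ! Suc k) \<in> E"
    unfolding dpath_def by blast
  show "dpath E (x # y # r)" unfolding dpath_def
  proof (intro conjI allI impI)
    fix k assume k: "Suc k < length (x # y # r)"
    show "((x # y # r) ! k, (x # y # r) ! Suc k) \<in> E"
    proof (cases k)
      case 0 then show ?thesis using a by simp
    next
      case (Suc k')
      then show ?thesis using a'[of k'] k by simp
    qed
  qed simp
qed

lemma dpath_Cons_tl: "dpath E (x # r) \<Longrightarrow> r \<noteq> [] \<Longrightarrow> dpath E r"
  by (cases r) auto

lemma dpath_append1:
  "dpath E (q @ [v]) \<longleftrightarrow> q = [] \<or> (dpath E q \<and> (last q, v) \<in> E)"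
proof (induction q)
  case Nil then show ?case by simp
next
  case (Cons a q)
  note IH = Cons.IH
  show ?case
  proof (cases q)
    case Nil then show ?thesis by simp
  next
    case (Cons b q')
    have "dpath E (a # q @ [v]) = ((a, b) \<in> E \<and> dpath E (q @ [v]))" using Cons by simp
    also have "\<dots> = ((a, b) \<in> E \<and> dpath E q \<and> (last q, v) \<in> E)" using IH Cons by simp
    also have "\<dots> = (dpath E (a # q) \<and> (last (a # q), v) \<in> E)" using Cons by simp
    finally show ?thesis by simp
  qed
qed

lemma dpath_trancl:
  assumes "dpath E p" "i < j" "j < length p"
  shows "(p ! i, p ! j) \<in> E\<^sup>+"
  using assms(2,3)
proof (induction j)
  case 0 then show ?case by simp
next
  case (Suc j)
  have e: "(p ! j, p ! Suc j) \<in> E" using assms(1) Suc.prems unfolding dpath_def by auto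
  show ?case
  proof (cases "i = j")
    case True then show ?thesis using e by auto
  next
    case False
    then have "(p ! i, p ! j) \<in> E\<^sup>+" using Suc by auto
    then show ?thesis using e by auto
  qed
qed

lemma dpath_rtrancl:
  assumes "dpath E p" shows "(hd p, last p) \<in> E\<^sup>*"
proof (cases "length p = 1")
  case True
  then obtain x where "p = [x]" by (metis One_nat_def length_0_conv length_Suc_conv)
  then show ?thesis by simp
next
  case False
  have ne: "p \<noteq> []" using assms by (simp add: dpath_def)
  then have "0 < length p - 1" "length p - 1 < length p" using False by (cases p; auto)+
  then have "(p ! 0, p ! (length p - 1)) \<in> E\<^sup>+" using dpath_trancl[OF assms] by blast
  then show ?thesis using ne by (simp add: hd_conv_nth last_conv_nth)
qed

lemma dpath_distinct:
  assumes "acyclic E" "dpath E p" shows "distinct p"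
proof (rule ccontr)
  assume "\<not> distinct p"
  then obtain i j where ij: "i < j" "j < length p" "p ! i = p ! j"
    by (metis distinct_conv_nth linorder_neqE_nat)
  then have "(p ! i, p ! i) \<in> E\<^sup>+" using dpath_trancl[OF assms(2) ij(1,2)] by simp
  then show False using assms(1) by (simp add: acyclic_def)
qed

lemma dpath_set:
  assumes "E \<subseteq> {..<n} \<times> {..<n}" "dpath E p" shows "set p \<subseteq> insert (hd p) {..<n}"
proof
  fix x assume "x \<in> set p"
  then obtain k where k: "k < length p" "p ! k = x" by (metis in_set_conv_nth)
  show "x \<in> insert (hd p) {..<n}"
  proof (cases k)
    case 0 then show ?thesis using k by (simp add: hd_conv_nth)
  next
    case (Suc k')
    then have "(p ! k', p ! k) \<in> E" using assms(2) k unfolding dpath_def by auto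
    then show ?thesis using assms(1) k by auto
  qed
qed

lemma finite_paths:
  assumes "is_dag n E" shows "finite (paths E u v)"
proof -
  have "paths E u v \<subseteq> {xs. set xs \<subseteq> insert u {..<n} \<and> distinct xs}"
  proof
    fix p assume "p \<in> paths E u v"
    then have "dpath E p" "hd p = u" by (auto simp: paths_def)
    then show "p \<in> {xs. set xs \<subseteq> insert u {..<n} \<and> distinct xs}"
      using assms dpath_set[of E n p] dpath_distinct[of E p] unfolding is_dag_def by auto
  qed
  then show ?thesis by (rule finite_subset) (simp add: finite_subset_distinct)
qed

lemma paths_refl:
  assumes "acyclic E" shows "paths E u u = {[u]}"
proof
  show "paths E u u \<subseteq> {[u]}"
  proof
    fix p assume p: "p \<in> paths E u u"
    then have d: "dpath E p" "hd p = u" "last p = u" by (auto simp: paths_def)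
    have "length p = 1"
    proof (rule ccontr)
      assume "length p \<noteq> 1"
      moreover have "p \<noteq> []" using d by (simp add: dpath_def)
      ultimately have "0 < length p - 1" "length p - 1 < length p" by (cases p; auto)+
      then have "(p ! 0, p ! (length p - 1)) \<in> E\<^sup>+" using dpath_trancl[OF d(1)] by blast
      then have "(u, u) \<in> E\<^sup>+" using d \<open>p \<noteq> []\<close> by (simp add: hd_conv_nth last_conv_nth)
      then show False using assms by (simp add: acyclic_def)
    qed
    then obtain x where "p = [x]" by (metis One_nat_def length_0_conv length_Suc_conv)
    then show "p \<in> {[u]}" using d by simp
  qed
qed (simp add: paths_def)

lemma paths_empty:
  assumes "(u, v) \<notin> E\<^sup>*" shows "paths E u v = {}"
  using assms dpath_rtrancl unfolding paths_def by blast

lemma pm_snoc: "q \<noteq> [] \<Longrightarrow> pm (q @ [v]) = pm q * Var (Lam (last q) v)"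
proof (induction q rule: pm.induct)
  case (1 x y r) then show ?case by (simp add: mult.assoc)
next
  case ("2_1") then show ?case by simp
next
  case ("2_2" x) then show ?case by simp
qed

lemma paths_last_decomp:
  assumes "u \<noteq> v"
  shows "paths E u v = (\<Union>w\<in>{w. (w, v) \<in> E}. (\<lambda>q. q @ [v]) ` paths E u w)"
proof
  show "paths E u v \<subseteq> (\<Union>w\<in>{w. (w, v) \<in> E}. (\<lambda>q. q @ [v]) ` paths E u w)"
  proof
    fix p assume p: "p \<in> paths E u v"
    then have d: "dpath E p" "hd p = u" "last p = v" by (auto simp: paths_def)
    have ne: "p \<noteq> []" using d by (simp add: dpath_def)
    have pe: "p = butlast p @ [v]" using ne d by (metis append_butlast_last_id)
    have bne: "butlast p \<noteq> []"
    proof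
      assume "butlast p = []"
      then have "p = [v]" using pe by simp
      then show False using d assms by simp
    qed
    have "dpath E (butlast p)" "(last (butlast p), v) \<in> E"
      using d(1) pe bne dpath_append1[of E "butlast p" v] by auto
    moreover have "hd (butlast p) = u" using d(2) bne pe by (metis hd_append2)
    ultimately show "p \<in> (\<Union>w\<in>{w. (w, v) \<in> E}. (\<lambda>q. q @ [v]) ` paths E u w)"
      using pe by (auto simp: paths_def)
  qed
next
  show "(\<Union>w\<in>{w. (w, v) \<in> E}. (\<lambda>q. q @ [v]) ` paths E u w) \<subseteq> paths E u v"
  proof
    fix p assume "p \<in> (\<Union>w\<in>{w. (w, v) \<in> E}. (\<lambda>q. q @ [v]) ` paths E u w)"
    then obtain w q where q: "(w, v) \<in> E" "q \<in> paths E u w" "p = q @ [v]" by auto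
    then have "q \<noteq> []" "hd q = u" "dpath E q" "last q = w" by (auto simp: paths_def dpath_def)
    then show "p \<in> paths E u v" using q by (auto simp: paths_def dpath_append1)
  qed
qed

lemma paths_first_decomp:
  assumes "u \<noteq> v"
  shows "paths E u v = (\<Union>w\<in>{w. (u, w) \<in> E}. (\<lambda>q. u # q) ` paths E w v)"
proof
  show "paths E u v \<subseteq> (\<Union>w\<in>{w. (u, w) \<in> E}. (\<lambda>q. u # q) ` paths E w v)"
  proof
    fix p assume p: "p \<in> paths E u v"
    then have d: "dpath E p" "hd p = u" "last p = v" by (auto simp: paths_def)
    have ne: "p \<noteq> []" using d by (simp add: dpath_def)
    then obtain r where pe: "p = u # r" using d(2) by (cases p) auto
    have rne: "r \<noteq> []" using pe d assms by auto
    then obtain w r' where r: "r = w # r'" by (cases r) auto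
    have "(u, w) \<in> E" "dpath E r" using d(1) pe r by auto
    moreover have "last r = v" using d(3) pe rne by simp
    ultimately show "p \<in> (\<Union>w\<in>{w. (u, w) \<in> E}. (\<lambda>q. u # q) ` paths E w v)"
      using pe r by (auto simp: paths_def)
  qed
next
  show "(\<Union>w\<in>{w. (u, w) \<in> E}. (\<lambda>q. u # q) ` paths E w v) \<subseteq> paths E u v"
  proof
    fix p assume "p \<in> (\<Union>w\<in>{w. (u, w) \<in> E}. (\<lambda>q. u # q) ` paths E w v)"
    then obtain w q where q: "(u, w) \<in> E" "q \<in> paths E w v" "p = u # q" by auto
    then have "q \<noteq> []" "hd q = w" "dpath E q" by (auto simp: paths_def dpath_def)
    then obtain r where "q = w # r" by (cases q) auto
    then show "p \<in> paths E u v" using q by (auto simp: paths_def)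
  qed
qed

lemma Lp_refl: "acyclic E \<Longrightarrow> Lp E u u = 1"
  by (simp add: Lp_def paths_refl)

lemma Lp_zero: "(u, v) \<notin> E\<^sup>* \<Longrightarrow> Lp E u v = 0"
  by (simp add: Lp_def paths_empty)

lemma Lp_last:
  assumes dag: "is_dag n E" and "u \<noteq> v"
  shows "Lp E u v = (\<Sum>w\<in>{w. (w, v) \<in> E}. Lp E u w * Var (Lam w v))"
proof -
  have fin: "finite {w. (w, v) \<in> E}" using dag unfolding is_dag_def
    by (rule_tac finite_subset[of _ "{..<n}"]) auto
  have "Lp E u v = (\<Sum>p\<in>(\<Union>w\<in>{w. (w, v) \<in> E}. (\<lambda>q. q @ [v]) ` paths E u w). pm p)"
    unfolding Lp_def paths_last_decomp[OF assms(2)] ..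
  also have "\<dots> = (\<Sum>w\<in>{w. (w, v) \<in> E}. \<Sum>p\<in>(\<lambda>q. q @ [v]) ` paths E u w. pm p)"
  proof (rule sum.UNION_disjoint)
    show "finite {w. (w, v) \<in> E}" by (rule fin)
    show "\<forall>i\<in>{w. (w, v) \<in> E}. finite ((\<lambda>q. q @ [v]) ` paths E u i)"
      using finite_paths[OF dag] by auto
    show "\<forall>i\<in>{w. (w, v) \<in> E}. \<forall>j\<in>{w. (w, v) \<in> E}. i \<noteq> j \<longrightarrow>
      (\<lambda>q. q @ [v]) ` paths E u i \<inter> (\<lambda>q. q @ [v]) ` paths E u j = {}"
      by (auto simp: paths_def)
  qed
  also have "\<dots> = (\<Sum>w\<in>{w. (w, v) \<in> E}. Lp E u w * Var (Lam w v))"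
  proof (rule sum.cong[OF refl])
    fix w assume "w \<in> {w. (w, v) \<in> E}"
    have "(\<Sum>p\<in>(\<lambda>q. q @ [v]) ` paths E u w. pm p) = (\<Sum>q\<in>paths E u w. pm (q @ [v]))"
      using sum.reindex[of "\<lambda>q. q @ [v]" "paths E u w" pm] by (simp add: inj_on_def o_def)
    also have "\<dots> = (\<Sum>q\<in>paths E u w. pm q * Var (Lam w v))"
      by (rule sum.cong[OF refl]) (auto simp: paths_def dpath_def pm_snoc)
    finally show "(\<Sum>p\<in>(\<lambda>q. q @ [v]) ` paths E u w. pm p) = Lp E u w * Var (Lam w v)"
      by (simp add: Lp_def sum_distrib_right)
  qed
  finally show ?thesis .
qed

lemma pm_Cons: "q \<noteq> [] \<Longrightarrow> pm (u # q) = Var (Lam u (hd q)) * pm q"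
  by (cases q) auto

lemma Lp_first:
  assumes dag: "is_dag n E" and "u \<noteq> v"
  shows "Lp E u v = (\<Sum>w\<in>{w. (u, w) \<in> E}. Var (Lam u w) * Lp E w v)"
proof -
  have fin: "finite {w. (u, w) \<in> E}" using dag unfolding is_dag_def
    by (rule_tac finite_subset[of _ "{..<n}"]) auto
  have "Lp E u v = (\<Sum>p\<in>(\<Union>w\<in>{w. (u, w) \<in> E}. (\<lambda>q. u # q) ` paths E w v). pm p)"
    unfolding Lp_def paths_first_decomp[OF assms(2)] ..
  also have "\<dots> = (\<Sum>w\<in>{w. (u, w) \<in> E}. \<Sum>p\<in>(\<lambda>q. u # q) ` paths E w v. pm p)"
  proof (rule sum.UNION_disjoint)
    show "finite {w. (u, w) \<in> E}" by (rule fin)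
    show "\<forall>i\<in>{w. (u, w) \<in> E}. finite ((\<lambda>q. u # q) ` paths E i v)"
      using finite_paths[OF dag] by auto
    show "\<forall>i\<in>{w. (u, w) \<in> E}. \<forall>j\<in>{w. (u, w) \<in> E}. i \<noteq> j \<longrightarrow>
      (\<lambda>q. u # q) ` paths E i v \<inter> (\<lambda>q. u # q) ` paths E j v = {}"
      by (auto simp: paths_def)
  qed
  also have "\<dots> = (\<Sum>w\<in>{w. (u, w) \<in> E}. Var (Lam u w) * Lp E w v)"
  proof (rule sum.cong[OF refl])
    fix w assume "w \<in> {w. (u, w) \<in> E}"
    have "(\<Sum>p\<in>(\<lambda>q. u # q) ` paths E w v. pm p) = (\<Sum>q\<in>paths E w v. pm (u # q))"
      using sum.reindex[of "\<lambda>q. u # q" "paths E w v" pm] by (simp add: inj_on_def o_def)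
    also have "\<dots> = (\<Sum>q\<in>paths E w v. Var (Lam u w) * pm q)"
      by (rule sum.cong[OF refl]) (auto simp: paths_def dpath_def pm_Cons)
    finally show "(\<Sum>p\<in>(\<lambda>q. u # q) ` paths E w v. pm p) = Var (Lam u w) * Lp E w v"
      by (simp add: Lp_def sum_distrib_left)
  qed
  finally show ?thesis .
qed

definition Lmat :: "nat \<Rightarrow> (nat \<times> nat) set \<Rightarrow> rpoly mat" where
  "Lmat n E = mat n n (\<lambda>(u, v). Lp E u v)"

lemma pa_subset: "is_dag n E \<Longrightarrow> v < n \<Longrightarrow> {w. (w, v) \<in> E} \<subseteq> {..<n}"
  unfolding is_dag_def by auto

lemma ch_subset: "is_dag n E \<Longrightarrow> {w. (u, w) \<in> E} \<subseteq> {..<n}"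
  unfolding is_dag_def by auto

lemma sum_Lambda_right:
  assumes dag: "is_dag n E" and v: "v < n"
  shows "(\<Sum>w<n. f w * (if (w, v) \<in> E then Var (Lam w v) else 0)) =
         (\<Sum>w\<in>{w. (w, v) \<in> E}. f w * Var (Lam w v))"
proof -
  have "(\<Sum>w<n. f w * (if (w, v) \<in> E then Var (Lam w v) else 0)) =
        (\<Sum>w\<in>{w. (w, v) \<in> E}. f w * (if (w, v) \<in> E then Var (Lam w v) else 0))"
    by (rule sum.mono_neutral_right) (use pa_subset[OF dag v] in auto)
  then show ?thesis by simp
qed

lemma sum_Lambda_left:
  assumes dag: "is_dag n E"
  shows "(\<Sum>w<n. (if (u, w) \<in> E then Var (Lam u w) else 0) * f w) =
         (\<Sum>w\<in>{w. (u, w) \<in> E}. Var (Lam u w) * f w)"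
proof -
  have "(\<Sum>w<n. (if (u, w) \<in> E then Var (Lam u w) else 0) * f w) =
        (\<Sum>w\<in>{w. (u, w) \<in> E}. (if (u, w) \<in> E then Var (Lam u w) else 0) * f w)"
    by (rule sum.mono_neutral_right) (use ch_subset[OF dag, of u] in auto)
  then show ?thesis by simp
qed

lemma Lp_cycle_sum_last:
  assumes dag: "is_dag n E"
  shows "(\<Sum>w\<in>{w. (w, u) \<in> E}. Lp E u w * Var (Lam w u)) = 0"
proof (rule sum.neutral, rule ballI)
  fix w assume w: "w \<in> {w. (w, u) \<in> E}"
  have "(u, w) \<notin> E\<^sup>*"
  proof
    assume "(u, w) \<in> E\<^sup>*"
    then have "(u, u) \<in> E\<^sup>+" using w by auto
    then show False using dag by (simp add: is_dag_def acyclic_def)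
  qed
  then show "Lp E u w * Var (Lam w u) = 0" by (simp add: Lp_zero)
qed

lemma Lp_cycle_sum_first:
  assumes dag: "is_dag n E"
  shows "(\<Sum>w\<in>{w. (u, w) \<in> E}. Var (Lam u w) * Lp E w u) = 0"
proof (rule sum.neutral, rule ballI)
  fix w assume w: "w \<in> {w. (u, w) \<in> E}"
  have "(w, u) \<notin> E\<^sup>*"
  proof
    assume "(w, u) \<in> E\<^sup>*"
    then have "(u, u) \<in> E\<^sup>+" using w by auto
    then show False using dag by (simp add: is_dag_def acyclic_def)
  qed
  then show "Var (Lam u w) * Lp E w u = 0" by (simp add: Lp_zero)
qed

lemma Lmat_left_inv:
  assumes dag: "is_dag n E"
  shows "Lmat n E * (1\<^sub>m n - Lambda_mat n E) = 1\<^sub>m n"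
proof (rule eq_matI)
  fix u v assume u: "u < dim_row (1\<^sub>m n :: rpoly mat)" and v: "v < dim_col (1\<^sub>m n :: rpoly mat)"
  then have u: "u < n" and v: "v < n" by auto
  have "(Lmat n E * (1\<^sub>m n - Lambda_mat n E)) $$ (u, v) =
      (\<Sum>w<n. Lp E u w * ((if w = v then 1 else 0) - (if (w, v) \<in> E then Var (Lam w v) else 0)))"
    using u v by (simp add: Lmat_def Lambda_mat_def scalar_prod_def lessThan_atLeast0)
  also have "\<dots> = (\<Sum>w<n. Lp E u w * (if w = v then 1 else 0)) -
      (\<Sum>w<n. Lp E u w * (if (w, v) \<in> E then Var (Lam w v) else 0))"
    by (simp add: right_diff_distrib sum_subtractf)
  also have "\<dots> = Lp E u v - (\<Sum>w\<in>{w. (w, v) \<in> E}. Lp E u w * Var (Lam w v))"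
  proof -
    have e: "(\<lambda>w. Lp E u w * (if w = v then 1 else 0)) = (\<lambda>w. if w = v then Lp E u w else 0)" by auto
    have "(\<Sum>w<n. Lp E u w * (if w = v then 1 else 0)) = Lp E u v"
      unfolding e using v by (simp add: sum.delta')
    then show ?thesis using sum_Lambda_right[OF dag v, of "Lp E u"] by simp
  qed
  also have "\<dots> = (if u = v then 1 else 0)"
  proof (cases "u = v")
    case True then show ?thesis
      using Lp_cycle_sum_last[OF dag, of u] dag by (simp add: Lp_refl is_dag_def)
  next
    case False then show ?thesis using Lp_last[OF dag False] by simp
  qed
  finally show "(Lmat n E * (1\<^sub>m n - Lambda_mat n E)) $$ (u, v) = 1\<^sub>m n $$ (u, v)"
    using u v by simp
qed (auto simp: Lmat_def Lambda_mat_def)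

lemma Lmat_right_inv:
  assumes dag: "is_dag n E"
  shows "(1\<^sub>m n - Lambda_mat n E) * Lmat n E = 1\<^sub>m n"
proof (rule eq_matI)
  fix u v assume u: "u < dim_row (1\<^sub>m n :: rpoly mat)" and v: "v < dim_col (1\<^sub>m n :: rpoly mat)"
  then have u: "u < n" and v: "v < n" by auto
  have "((1\<^sub>m n - Lambda_mat n E) * Lmat n E) $$ (u, v) =
      (\<Sum>w<n. ((if u = w then 1 else 0) - (if (u, w) \<in> E then Var (Lam u w) else 0)) * Lp E w v)"
    using u v by (simp add: Lmat_def Lambda_mat_def scalar_prod_def lessThan_atLeast0)
  also have "\<dots> = (\<Sum>w<n. (if u = w then 1 else 0) * Lp E w v) -
      (\<Sum>w<n. (if (u, w) \<in> E then Var (Lam u w) else 0) * Lp E w v)"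
    by (simp add: left_diff_distrib sum_subtractf)
  also have "\<dots> = Lp E u v - (\<Sum>w\<in>{w. (u, w) \<in> E}. Var (Lam u w) * Lp E w v)"
  proof -
    have e: "(\<lambda>w. (if u = w then 1 else 0) * Lp E w v) = (\<lambda>w. if u = w then Lp E w v else 0)" by auto
    have "(\<Sum>w<n. (if u = w then 1 else 0) * Lp E w v) = Lp E u v"
      unfolding e using u by (simp add: sum.delta)
    then show ?thesis using sum_Lambda_left[OF dag, of u "\<lambda>w. Lp E w v"] by simp
  qed
  also have "\<dots> = (if u = v then 1 else 0)"
  proof (cases "u = v")
    case True then show ?thesis
      using Lp_cycle_sum_first[OF dag, of u] dag by (simp add: Lp_refl is_dag_def)
  next
    case False then show ?thesis using Lp_first[OF dag False] by simp
  qed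
  finally show "((1\<^sub>m n - Lambda_mat n E) * Lmat n E) $$ (u, v) = 1\<^sub>m n $$ (u, v)"
    using u v by simp
qed (auto simp: Lmat_def Lambda_mat_def)

lemma mat_inverse_Lmat:
  assumes dag: "is_dag n E"
  shows "mat_inverse n (1\<^sub>m n - Lambda_mat n E) = Lmat n E"
  unfolding mat_inverse_def
proof (rule the_equality)
  show "Lmat n E \<in> carrier_mat n n \<and> Lmat n E * (1\<^sub>m n - Lambda_mat n E) = 1\<^sub>m n \<and>
    (1\<^sub>m n - Lambda_mat n E) * Lmat n E = 1\<^sub>m n"
    using Lmat_left_inv[OF dag] Lmat_right_inv[OF dag] by (simp add: Lmat_def)
next
  fix N assume N: "N \<in> carrier_mat n n \<and> N * (1\<^sub>m n - Lambda_mat n E) = 1\<^sub>m n \<and>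
    (1\<^sub>m n - Lambda_mat n E) * N = 1\<^sub>m n"
  let ?M = "1\<^sub>m n - Lambda_mat n E"
  have M: "?M \<in> carrier_mat n n" unfolding carrier_mat_def Lambda_mat_def by simp
  have L: "Lmat n E \<in> carrier_mat n n" by (simp add: Lmat_def)
  have Nc: "N \<in> carrier_mat n n" using N by simp
  have "N = N * (?M * Lmat n E)" using Lmat_right_inv[OF dag] right_mult_one_mat[OF Nc] by simp
  also have "\<dots> = (N * ?M) * Lmat n E" using assoc_mult_mat[OF Nc M L] by simp
  also have "\<dots> = Lmat n E" using N left_mult_one_mat[OF L] by simp
  finally show "N = Lmat n E" .
qed

lemma phi_Sigma_entry:
  assumes dag: "is_dag n E" and u: "u < n" and v: "v < n"
  shows "phi_Sigma n E $$ (u, v) = (\<Sum>s<n. Var (Om s) * (Lp E s u * Lp E s v))"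
proof -
  have T: "(transpose_mat (Lmat n E) * Omega_mat n) $$ (u, w) = Lp E w u * Var (Om w)"
    if w: "w < n" for w
  proof -
    have "(transpose_mat (Lmat n E) * Omega_mat n) $$ (u, w) =
        (\<Sum>s<n. Lp E s u * (if s = w then Var (Om s) else 0))"
      using u w by (simp add: Lmat_def Omega_mat_def scalar_prod_def lessThan_atLeast0)
    also have "\<dots> = Lp E w u * Var (Om w)"
      using w by (simp add: if_distrib sum.delta cong: if_cong)
    finally show ?thesis .
  qed
  have "phi_Sigma n E $$ (u, v) = ((transpose_mat (Lmat n E) * Omega_mat n) * Lmat n E) $$ (u, v)"
    by (simp add: phi_Sigma_def mat_inverse_Lmat[OF dag] Let_def)
  also have "\<dots> = (\<Sum>w<n. (transpose_mat (Lmat n E) * Omega_mat n) $$ (u, w) * Lp E w v)"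
    using u v by (simp add: Lmat_def Omega_mat_def scalar_prod_def lessThan_atLeast0)
  also have "\<dots> = (\<Sum>w<n. Lp E w u * Var (Om w) * Lp E w v)"
    by (rule sum.cong) (simp_all add: T)
  finally show ?thesis by (simp add: ac_simps)
qed

section \<open>Determinants with index functions; Cauchy-Binet\<close>

definition Dt :: "(nat \<Rightarrow> nat \<Rightarrow> 'a::comm_ring_1) \<Rightarrow> (nat \<Rightarrow> nat) \<Rightarrow> (nat \<Rightarrow> nat) \<Rightarrow> nat \<Rightarrow> 'a" where
  "Dt M \<alpha> \<beta> k = det (mat k k (\<lambda>(x, y). M (\<alpha> x) (\<beta> y)))"

lemma Dt_leibniz:
  "Dt M \<alpha> \<beta> k = (\<Sum>p | p permutes {..<k}. signof p * (\<Prod>i<k. M (\<alpha> i) (\<beta> (p i))))"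
proof -
  have c: "mat k k (\<lambda>(x, y). M (\<alpha> x) (\<beta> y)) \<in> carrier_mat k k" by simp
  show ?thesis unfolding Dt_def det_def'[OF c]
    by (rule sum.cong) (auto simp: lessThan_atLeast0 intro!: prod.cong)
qed

lemma pick_inj: "finite S \<Longrightarrow> inj_on (pick S) {..<card S}"
  by (rule inj_onI) (metis card_pick_le lessThan_iff)

lemma pick_image: "finite S \<Longrightarrow> pick S ` {..<card S} = S"
proof
  assume "finite S"
  show "pick S ` {..<card S} \<subseteq> S"
  proof
    fix y assume "y \<in> pick S ` {..<card S}"
    then obtain i where "i < card S" "y = pick S i" by auto
    then show "y \<in> S" using pick_in_set_le[of i S] by simp
  qed
  show "S \<subseteq> pick S ` {..<card S}"
  proof
    fix x assume x: "x \<in> S"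
    have "{a \<in> S. a < x} \<subset> S" using x by auto
    then have "card {a \<in> S. a < x} < card S" using psubset_card_mono[OF \<open>finite S\<close>] by blast
    then have "card {a \<in> S. a < x} \<in> {..<card S}" by simp
    moreover have "x = pick S (card {a \<in> S. a < x})" using pick_card_in_set[OF x] by simp
    ultimately show "x \<in> pick S ` {..<card S}" by (rule rev_image_eqI)
  qed
qed

lemma Dt_expand:
  fixes X Y :: "nat \<Rightarrow> nat \<Rightarrow> 'a::comm_ring_1"
  shows "Dt (\<lambda>u v. \<Sum>s<n. X s u * Y s v) \<alpha> \<beta> k =
    (\<Sum>f\<in>Pi\<^sub>E {..<k} (\<lambda>_. {..<n}). (\<Prod>i<k. X (f i) (\<alpha> i)) * Dt Y f \<beta> k)"
proof -
  let ?P = "{p. p permutes {..<k}}"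
  let ?F = "Pi\<^sub>E {..<k} (\<lambda>_. {..<n})"
  have "Dt (\<lambda>u v. \<Sum>s<n. X s u * Y s v) \<alpha> \<beta> k =
      (\<Sum>p\<in>?P. signof p * (\<Prod>i<k. \<Sum>s<n. X s (\<alpha> i) * Y s (\<beta> (p i))))"
    by (simp add: Dt_leibniz)
  also have "\<dots> = (\<Sum>p\<in>?P. signof p * (\<Sum>f\<in>?F. \<Prod>i<k. X (f i) (\<alpha> i) * Y (f i) (\<beta> (p i))))"
    by (subst prod_sum_PiE) auto
  also have "\<dots> = (\<Sum>p\<in>?P. \<Sum>f\<in>?F. (\<Prod>i<k. X (f i) (\<alpha> i)) * (signof p * (\<Prod>i<k. Y (f i) (\<beta> (p i)))))"
    by (simp add: sum_distrib_left prod.distrib ac_simps)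
  also have "\<dots> = (\<Sum>f\<in>?F. \<Sum>p\<in>?P. (\<Prod>i<k. X (f i) (\<alpha> i)) * (signof p * (\<Prod>i<k. Y (f i) (\<beta> (p i)))))"
    by (rule sum.swap)
  also have "\<dots> = (\<Sum>f\<in>?F. (\<Prod>i<k. X (f i) (\<alpha> i)) * Dt Y f \<beta> k)"
    by (simp add: Dt_leibniz sum_distrib_left)
  finally show ?thesis .
qed

lemma Dt_noninj:
  assumes "\<not> inj_on f {..<k}"
  shows "Dt Y f \<beta> k = 0"
proof -
  obtain i j where ij: "i < k" "j < k" "i \<noteq> j" "f i = f j"
    using assms unfolding inj_on_def by auto
  show ?thesis unfolding Dt_def
    by (rule det_identical_rows[OF _ ij(3) ij(1) ij(2)]) (auto simp: ij intro!: eq_vecI)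
qed

lemma Dt_perm_rows:
  assumes "\<pi> permutes {..<k}"
  shows "Dt Y (\<lambda>i. \<gamma> (\<pi> i)) \<beta> k = signof \<pi> * Dt Y \<gamma> \<beta> k"
proof -
  let ?A = "mat k k (\<lambda>(x, y). Y (\<gamma> x) (\<beta> y))"
  have p: "\<pi> permutes {0..<k}" using assms by (simp add: lessThan_atLeast0)
  have pk: "\<And>i. i < k \<Longrightarrow> \<pi> i < k" using permutes_in_image[OF assms] by auto
  have "mat k k (\<lambda>(x, y). Y (\<gamma> (\<pi> x)) (\<beta> y)) = mat k k (\<lambda>(i, j). ?A $$ (\<pi> i, j))"
    using pk by (intro eq_matI) auto
  then show ?thesis unfolding Dt_def using det_permute_rows[OF _ p, of ?A] by simp
qed

lemma Dt_transpose_sum: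
  "(\<Sum>p | p permutes {..<k}. signof p * (\<Prod>i<k. X (\<gamma> (p i)) (\<alpha> i))) = Dt X \<gamma> \<alpha> k"
proof -
  let ?N = "mat k k (\<lambda>(i, j). X (\<gamma> j) (\<alpha> i))"
  have c: "?N \<in> carrier_mat k k" by simp
  have "det ?N = (\<Sum>p | p permutes {..<k}. signof p * (\<Prod>i<k. X (\<gamma> (p i)) (\<alpha> i)))"
    unfolding det_def'[OF c]
    by (rule sum.cong) (auto simp: lessThan_atLeast0 permutes_in_image intro!: prod.cong)
  moreover have "det ?N = det (transpose_mat ?N)" using det_transpose[OF c] by simp
  moreover have "transpose_mat ?N = mat k k (\<lambda>(x, y). X (\<gamma> x) (\<alpha> y))"
    by (rule eq_matI) auto
  ultimately show ?thesis unfolding Dt_def by simp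
qed

definition cb_h :: "nat \<Rightarrow> nat set \<Rightarrow> (nat \<Rightarrow> nat) \<Rightarrow> nat \<Rightarrow> nat" where
  "cb_h k S \<pi> = restrict (\<lambda>i. pick S (\<pi> i)) {..<k}"

definition cb_pi :: "nat \<Rightarrow> (nat \<Rightarrow> nat) \<Rightarrow> nat \<Rightarrow> nat" where
  "cb_pi k f = (\<lambda>x. if x < k then card {a \<in> f ` {..<k}. a < f x} else x)"

lemma cb_h_props:
  assumes S: "S \<subseteq> {..<n}" "card S = k" and \<pi>: "\<pi> permutes {..<k}"
  shows "cb_h k S \<pi> ` {..<k} = S" "cb_pi k (cb_h k S \<pi>) = \<pi>"
    "cb_h k S \<pi> \<in> Pi\<^sub>E {..<k} (\<lambda>_. {..<n})" "inj_on (cb_h k S \<pi>) {..<k}"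
proof -
  have finS: "finite S" using S finite_subset by blast
  have pk: "\<And>i. i < k \<Longrightarrow> \<pi> i < card S" using permutes_in_image[OF \<pi>] S by auto
  have "(\<lambda>i. pick S (\<pi> i)) ` {..<k} = pick S ` (\<pi> ` {..<k})" by auto
  also have "\<pi> ` {..<k} = {..<k}" using \<pi> by (simp add: permutes_image)
  finally have img: "(\<lambda>i. pick S (\<pi> i)) ` {..<k} = S" using pick_image[OF finS] S by simp
  then show img': "cb_h k S \<pi> ` {..<k} = S" unfolding cb_h_def by simp
  show "cb_pi k (cb_h k S \<pi>) = \<pi>"
  proof
    fix x show "cb_pi k (cb_h k S \<pi>) x = \<pi> x"
    proof (cases "x < k")
      case True
      have "cb_pi k (cb_h k S \<pi>) x = card {a \<in> S. a < pick S (\<pi> x)}"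
        using True img' by (simp add: cb_pi_def cb_h_def)
      also have "\<dots> = \<pi> x" using pk[OF True] by (simp add: card_pick_le)
      finally show ?thesis .
    next
      case False then show ?thesis using permutes_others[OF \<pi>, of x] by (simp add: cb_pi_def)
    qed
  qed
  show "cb_h k S \<pi> \<in> Pi\<^sub>E {..<k} (\<lambda>_. {..<n})"
  proof -
    have "pick S (\<pi> i) \<in> {..<n}" if "i < k" for i
      using pick_in_set_le[OF pk[OF that]] S by blast
    then show ?thesis by (auto simp: cb_h_def)
  qed
  show "inj_on (cb_h k S \<pi>) {..<k}"
  proof (rule inj_onI)
    fix x y assume xy: "x \<in> {..<k}" "y \<in> {..<k}" "cb_h k S \<pi> x = cb_h k S \<pi> y"
    then have "pick S (\<pi> x) = pick S (\<pi> y)" by (simp add: cb_h_def)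
    moreover have "\<pi> x \<in> {..<card S}" "\<pi> y \<in> {..<card S}" using xy pk by auto
    ultimately have "\<pi> x = \<pi> y" using pick_inj[OF finS] by (meson inj_onD)
    then show "x = y" using permutes_inj[OF \<pi>] by (meson injD)
  qed
qed

lemma cb_iv_props:
  assumes f: "f \<in> Pi\<^sub>E {..<k} (\<lambda>_. {..<n})" "inj_on f {..<k}"
  shows "cb_h k (f ` {..<k}) (cb_pi k f) = f" "f ` {..<k} \<subseteq> {..<n}" "card (f ` {..<k}) = k"
    "cb_pi k f permutes {..<k}"
proof -
  let ?S = "f ` {..<k}"
  have finS: "finite ?S" by auto
  show cardS: "card ?S = k" using f by (simp add: card_image)
  show "?S \<subseteq> {..<n}" using f by auto
  have pi_lt: "cb_pi k f x < k" if "x < k" for x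
  proof -
    have "{a \<in> ?S. a < f x} \<subset> ?S" using that by auto
    then have "card {a \<in> ?S. a < f x} < card ?S" using psubset_card_mono[OF finS] by blast
    then show ?thesis using that cardS by (simp add: cb_pi_def)
  qed
  have pick_pi: "pick ?S (cb_pi k f x) = f x" if "x < k" for x
    using that pick_card_in_set[of "f x" ?S] by (simp add: cb_pi_def)
  show "cb_h k ?S (cb_pi k f) = f"
  proof
    fix x show "cb_h k ?S (cb_pi k f) x = f x"
    proof (cases "x < k")
      case True then show ?thesis using pick_pi by (simp add: cb_h_def)
    next
      case False then show ?thesis using f by (auto simp: PiE_def extensional_def cb_h_def)
    qed
  qed
  have inj: "inj_on (cb_pi k f) {..<k}"
  proof (rule inj_onI)
    fix x y assume xy: "x \<in> {..<k}" "y \<in> {..<k}" "cb_pi k f x = cb_pi k f y"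
    then have "f x = f y" using pick_pi by (metis lessThan_iff)
    then show "x = y" using f xy by (auto simp: inj_on_def)
  qed
  have "cb_pi k f ` {..<k} \<subseteq> {..<k}" using pi_lt by auto
  then have "cb_pi k f ` {..<k} = {..<k}" using inj by (intro endo_inj_surj) auto
  then have "bij_betw (cb_pi k f) {..<k} {..<k}" using inj by (simp add: bij_betw_def)
  then show "cb_pi k f permutes {..<k}" by (rule bij_imp_permutes) (simp add: cb_pi_def)
qed

lemma cauchy_binet:
  fixes X Y :: "nat \<Rightarrow> nat \<Rightarrow> 'a::comm_ring_1"
  shows "Dt (\<lambda>u v. \<Sum>s<n. X s u * Y s v) \<alpha> \<beta> k =
    (\<Sum>S\<in>{S. S \<subseteq> {..<n} \<and> card S = k}. Dt X (pick S) \<alpha> k * Dt Y (pick S) \<beta> k)"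
proof -
  let ?F = "Pi\<^sub>E {..<k} (\<lambda>_. {..<n})"
  let ?T = "{f\<in>?F. inj_on f {..<k}}"
  let ?SS = "{S. S \<subseteq> {..<n} \<and> card S = k}"
  let ?P = "{p. p permutes {..<k}}"
  let ?g = "\<lambda>f. (\<Prod>i<k. X (f i) (\<alpha> i)) * Dt Y f \<beta> k"
  let ?h = "\<lambda>Sp. cb_h k (fst Sp) (snd Sp)"
  let ?iv = "\<lambda>f. (f ` {..<k}, cb_pi k f)"
  have finSS: "finite ?SS" by (rule finite_subset[of _ "Pow {..<n}"]) auto
  have finP: "finite ?P" by (simp add: finite_permutations)
  have "Dt (\<lambda>u v. \<Sum>s<n. X s u * Y s v) \<alpha> \<beta> k = (\<Sum>f\<in>?F. ?g f)"
    by (rule Dt_expand)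
  also have "\<dots> = (\<Sum>f\<in>?T. ?g f)"
    by (rule sum.mono_neutral_right) (auto simp: Dt_noninj intro: finite_PiE)
  also have "\<dots> = (\<Sum>Sp\<in>Sigma ?SS (\<lambda>_. ?P). ?g (?h Sp))"
  proof (rule sum.reindex_bij_witness[where i = ?h and j = ?iv])
    fix f assume "f \<in> ?T"
    then have f: "f \<in> ?F" "inj_on f {..<k}" by auto
    show "?h (?iv f) = f" using cb_iv_props[OF f] by simp
    show "?iv f \<in> Sigma ?SS (\<lambda>_. ?P)" using cb_iv_props[OF f] by simp
    show "?g (?h (?iv f)) = ?g f" using cb_iv_props[OF f] by simp
  next
    fix Sp assume "Sp \<in> Sigma ?SS (\<lambda>_. ?P)"
    then obtain S \<pi> where Sp: "Sp = (S, \<pi>)" "S \<subseteq> {..<n}" "card S = k" "\<pi> permutes {..<k}" by auto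
    show "?iv (?h Sp) = Sp" using cb_h_props[OF Sp(2,3,4)] Sp(1) by simp
    show "?h Sp \<in> ?T" using cb_h_props[OF Sp(2,3,4)] Sp(1) by simp
  qed
  also have "\<dots> = (\<Sum>(S, \<pi>)\<in>Sigma ?SS (\<lambda>_. ?P). ?g (?h (S, \<pi>)))"
    by (rule sum.cong) auto
  also have "\<dots> = (\<Sum>S\<in>?SS. \<Sum>\<pi>\<in>?P. ?g (?h (S, \<pi>)))"
    by (rule sum.Sigma[symmetric]) (use finSS finP in auto)
  also have "\<dots> = (\<Sum>S\<in>?SS. Dt X (pick S) \<alpha> k * Dt Y (pick S) \<beta> k)"
  proof (rule sum.cong[OF refl])
    fix S assume S: "S \<in> ?SS"
    have "(\<Sum>\<pi>\<in>?P. ?g (?h (S, \<pi>))) =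
        (\<Sum>\<pi>\<in>?P. (signof \<pi> * (\<Prod>i<k. X (pick S (\<pi> i)) (\<alpha> i))) * Dt Y (pick S) \<beta> k)"
    proof (rule sum.cong[OF refl])
      fix \<pi> assume \<pi>: "\<pi> \<in> ?P"
      have e1: "(\<Prod>i<k. X (?h (S, \<pi>) i) (\<alpha> i)) = (\<Prod>i<k. X (pick S (\<pi> i)) (\<alpha> i))"
        by (rule prod.cong) (auto simp: cb_h_def)
      have "Dt Y (?h (S, \<pi>)) \<beta> k = Dt Y (\<lambda>i. pick S (\<pi> i)) \<beta> k"
        unfolding Dt_def by (intro arg_cong[where f = det] eq_matI) (auto simp: cb_h_def)
      also have "\<dots> = signof \<pi> * Dt Y (pick S) \<beta> k" using \<pi> by (simp add: Dt_perm_rows)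
      finally show "?g (?h (S, \<pi>)) = (signof \<pi> * (\<Prod>i<k. X (pick S (\<pi> i)) (\<alpha> i))) * Dt Y (pick S) \<beta> k"
        using e1 by (simp add: ac_simps)
    qed
    also have "\<dots> = Dt X (pick S) \<alpha> k * Dt Y (pick S) \<beta> k"
      by (simp add: sum_distrib_right[symmetric] Dt_transpose_sum)
    finally show "(\<Sum>\<pi>\<in>?P. ?g (?h (S, \<pi>))) = Dt X (pick S) \<alpha> k * Dt Y (pick S) \<beta> k" .
  qed
  finally show ?thesis .
qed

section \<open>Variable control and keys of sums\<close>

definition goodp :: "var set \<Rightarrow> rpoly \<Rightarrow> bool" where
  "goodp W p \<longleftrightarrow> (\<forall>m\<in>pkeys p. pkeys m \<subseteq> W)"

lemma goodp_0[simp]: "goodp W 0" by (simp add: goodp_def)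
lemma goodp_1[simp]: "goodp W 1" by (simp add: goodp_def)

lemma goodp_add: "goodp W p \<Longrightarrow> goodp W q \<Longrightarrow> goodp W (p + q)"
  unfolding goodp_def
proof
  fix m assume p: "\<forall>m\<in>pkeys p. pkeys m \<subseteq> W" and q: "\<forall>m\<in>pkeys q. pkeys m \<subseteq> W"
    and m: "m \<in> pkeys (p + q)"
  then have "m \<in> pkeys p \<or> m \<in> pkeys q" using keys_add[of p q] by auto
  then show "pkeys m \<subseteq> W" using p q by auto
qed

lemma goodp_uminus: "goodp W p \<Longrightarrow> goodp W (- p)"
  unfolding goodp_def by simp

lemma goodp_diff: "goodp W p \<Longrightarrow> goodp W q \<Longrightarrow> goodp W (p - q)"
  using goodp_add[of W p "- q"] goodp_uminus[of W q] by simp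

lemma goodp_mult: "goodp W p \<Longrightarrow> goodp W q \<Longrightarrow> goodp W (p * q)"
proof -
  assume p: "goodp W p" and q: "goodp W q"
  show "goodp W (p * q)" unfolding goodp_def
  proof
    fix m assume "m \<in> pkeys (p * q)"
    then obtain a b where a_b: "m = a + b" "a \<in> pkeys p" "b \<in> pkeys q" using keys_mult[of p q] by auto
    moreover have "pkeys a \<subseteq> W" "pkeys b \<subseteq> W" using p q a_b unfolding goodp_def by auto
    ultimately show "pkeys m \<subseteq> W" using keys_add[of a b] by auto
  qed
qed

lemma goodp_sum: "(\<And>i. i \<in> I \<Longrightarrow> goodp W (f i)) \<Longrightarrow> goodp W (sum f I)"
proof (induction I rule: infinite_finite_induct)
  case (insert x F) then show ?case by (simp add: goodp_add)
qed simp_all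

lemma goodp_prod: "(\<And>i. i \<in> I \<Longrightarrow> goodp W (f i)) \<Longrightarrow> goodp W (prod f I)"
proof (induction I rule: infinite_finite_induct)
  case (insert x F) then show ?case by (simp add: goodp_mult)
qed simp_all

lemma goodp_of_int[simp]: "goodp W (of_int z)"
proof -
  have "pkeys (of_int z :: rpoly) \<subseteq> {0}"
  proof
    fix m assume "m \<in> pkeys (of_int z :: rpoly)"
    then have "plookup (of_int z :: rpoly) m \<noteq> 0" by (simp add: in_keys_iff)
    then show "m \<in> {0}" by (cases "m = 0") (simp_all add: lookup_of_int)
  qed
  then show ?thesis unfolding goodp_def by auto
qed

lemma goodp_Var: "x \<in> W \<Longrightarrow> goodp W (Var x)"
  by (simp add: goodp_def Var_def)

lemma goodp_mono: "goodp W p \<Longrightarrow> W \<subseteq> W' \<Longrightarrow> goodp W' p"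
  unfolding goodp_def by blast

lemma goodp_det:
  assumes "A \<in> carrier_mat k k" and "\<And>i j. i < k \<Longrightarrow> j < k \<Longrightarrow> goodp W (A $$ (i, j))"
  shows "goodp W (det A)"
  unfolding det_def'[OF assms(1)]
proof (rule goodp_sum)
  fix p assume p: "p \<in> {p. p permutes {0..<k}}"
  have "goodp W (\<Prod>i = 0..<k. A $$ (i, p i))"
  proof (rule goodp_prod)
    fix i assume "i \<in> {0..<k}"
    then show "goodp W (A $$ (i, p i))" using assms(2) p permutes_in_image[of p "{0..<k}" i] by auto
  qed
  then show "goodp W (signof p * (\<Prod>i = 0..<k. A $$ (i, p i)))" by (simp add: goodp_mult)
qed

lemma goodp_Dt:
  assumes "\<And>i j. i < k \<Longrightarrow> j < k \<Longrightarrow> goodp W (M (\<alpha> i) (\<beta> j))"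
  shows "goodp W (Dt M \<alpha> \<beta> k)"
  unfolding Dt_def by (rule goodp_det) (auto simp: assms)

lemma lookup_Var_mult:
  "plookup (Var x * p) (Poly_Mapping.single x 1 + m) = plookup p m"
proof -
  have "plookup (Var x * p) (Poly_Mapping.single x 1 + m) =
      plookup (Var x) (Poly_Mapping.single x 1) * plookup p m"
    by (rule lookup_mult_unique) (auto simp: Var_def)
  then show ?thesis by (simp add: Var_def)
qed

lemma keys_Var_mult: "pkeys (Var x * p) = (\<lambda>m. Poly_Mapping.single x 1 + m) ` pkeys p"
proof
  show "pkeys (Var x * p) \<subseteq> (\<lambda>m. Poly_Mapping.single x 1 + m) ` pkeys p"
    using keys_mult[of "Var x" p] by (auto simp: Var_def)
  show "(\<lambda>m. Poly_Mapping.single x 1 + m) ` pkeys p \<subseteq> pkeys (Var x * p)"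
    using lookup_Var_mult by (auto simp: in_keys_iff)
qed

lemma card_keys_Var_mult: "card (pkeys (Var x * p)) = card (pkeys p)"
  unfolding keys_Var_mult by (rule card_image) (simp add: inj_on_def)

lemma keys_add_disjoint:
  assumes "pkeys p \<inter> pkeys q = {}"
  shows "pkeys (p + q) = pkeys p \<union> pkeys q"
proof
  show "pkeys (p + q) \<subseteq> pkeys p \<union> pkeys q" by (rule keys_add)
  show "pkeys p \<union> pkeys q \<subseteq> pkeys (p + q)"
  proof
    fix m assume m: "m \<in> pkeys p \<union> pkeys q"
    then show "m \<in> pkeys (p + q)"
    proof
      assume a: "m \<in> pkeys p"
      then have "plookup q m = 0" using assms by (auto simp: in_keys_iff)
      then show ?thesis using a by (simp add: in_keys_iff lookup_add)
    next
      assume a: "m \<in> pkeys q"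
      then have "plookup p m = 0" using assms by (auto simp: in_keys_iff)
      then show ?thesis using a by (simp add: in_keys_iff lookup_add)
    qed
  qed
qed

lemma keys_sum_disjoint:
  fixes f :: "'i \<Rightarrow> rpoly"
  assumes "finite I" and "\<And>i j. i \<in> I \<Longrightarrow> j \<in> I \<Longrightarrow> i \<noteq> j \<Longrightarrow> pkeys (f i) \<inter> pkeys (f j) = {}"
  shows "pkeys (sum f I) = (\<Union>i\<in>I. pkeys (f i))"
  using assms
proof (induction I rule: finite_induct)
  case (insert x F)
  have "pkeys (f x) \<inter> pkeys (sum f F) = {}"
    using insert by auto
  then show ?case using insert by (simp add: keys_add_disjoint)
qed simp

lemma card_keys_sum_disjoint:
  fixes f :: "'i \<Rightarrow> rpoly"
  assumes "finite I" and "\<And>i j. i \<in> I \<Longrightarrow> j \<in> I \<Longrightarrow> i \<noteq> j \<Longrightarrow> pkeys (f i) \<inter> pkeys (f j) = {}"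
  shows "card (pkeys (sum f I)) = (\<Sum>i\<in>I. card (pkeys (f i)))"
proof -
  have e: "pkeys (sum f I) = (\<Union>i\<in>I. pkeys (f i))" by (rule keys_sum_disjoint[OF assms])
  show ?thesis unfolding e by (rule card_UN_disjoint) (use assms in auto)
qed

lemma keys_neg_one_pow: "pkeys ((-1) ^ j * p) = pkeys (p :: rpoly)"
proof (cases "even j")
  case True then have "(-1::rpoly) ^ j = 1" by (rule neg_one_even_power)
  then show ?thesis by simp
next
  case False then have "(-1::rpoly) ^ j = -1" by (rule neg_one_odd_power)
  then show ?thesis by simp
qed

section \<open>Non-intersecting path systems indexed by their sinks\<close>

definition nps :: "(nat \<times> nat) set \<Rightarrow> nat set \<Rightarrow> nat set \<Rightarrow> (nat \<Rightarrow> nat list) set" where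
  "nps E S A = {\<sigma>. \<sigma> \<in> extensional A \<and> (\<forall>a\<in>A. dpath E (\<sigma> a) \<and> last (\<sigma> a) = a) \<and>
     (\<lambda>a. hd (\<sigma> a)) ` A = S \<and> (\<forall>a\<in>A. \<forall>b\<in>A. a \<noteq> b \<longrightarrow> set (\<sigma> a) \<inter> set (\<sigma> b) = {})}"

lemma dpath_ne: "dpath E p \<Longrightarrow> p \<noteq> []"
  by (simp add: dpath_def)

lemma dpath_mem_last:
  assumes "dpath E p" "x \<in> set p" shows "(x, last p) \<in> E\<^sup>*"
proof -
  obtain i where i: "i < length p" "p ! i = x" using assms(2) by (metis in_set_conv_nth)
  have ne: "p \<noteq> []" using assms(1) by (simp add: dpath_def)
  show ?thesis
  proof (cases "i < length p - 1")
    case True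
    then have "(p ! i, p ! (length p - 1)) \<in> E\<^sup>+" using dpath_trancl[OF assms(1)] by simp
    then show ?thesis using i ne by (simp add: last_conv_nth)
  next
    case False
    then have "i = length p - 1" using i by simp
    then show ?thesis using i ne by (simp add: last_conv_nth)
  qed
qed

lemma dpath_hd_mem:
  assumes "dpath E p" "x \<in> set p" shows "(hd p, x) \<in> E\<^sup>*"
proof -
  obtain i where i: "i < length p" "p ! i = x" using assms(2) by (metis in_set_conv_nth)
  have ne: "p \<noteq> []" using assms(1) by (simp add: dpath_def)
  show ?thesis
  proof (cases "i = 0")
    case True then show ?thesis using i ne by (simp add: hd_conv_nth)
  next
    case False
    then have "(p ! 0, p ! i) \<in> E\<^sup>+" using dpath_trancl[OF assms(1), of 0 i] i by simp
    then show ?thesis using i ne by (simp add: hd_conv_nth)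
  qed
qed

lemma dpath_hd_last_eq:
  assumes "acyclic E" "dpath E p" "hd p = last p" shows "p = [hd p]"
  using paths_refl[OF assms(1), of "hd p"] assms(2,3) unfolding paths_def by auto

lemma nps_empty: "nps E {} {} = {(\<lambda>_. undefined)}"
  unfolding nps_def by (auto simp: extensional_def)

lemma finite_nps:
  assumes dag: "is_dag n E" and A: "finite A"
  shows "finite (nps E S A)"
proof -
  have "nps E S A \<subseteq> Pi\<^sub>E A (\<lambda>a. \<Union>s\<in>insert a {..<n}. paths E s a)"
  proof
    fix \<sigma> assume s: "\<sigma> \<in> nps E S A"
    show "\<sigma> \<in> Pi\<^sub>E A (\<lambda>a. \<Union>s\<in>insert a {..<n}. paths E s a)"
    proof (rule PiE_I)
      fix a assume a: "a \<in> A"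
      then have d: "dpath E (\<sigma> a)" "last (\<sigma> a) = a" using s by (auto simp: nps_def)
      have "hd (\<sigma> a) \<in> insert a {..<n}"
      proof (cases "hd (\<sigma> a) = a")
        case False
        then have "length (\<sigma> a) \<noteq> 1" using d by (metis One_nat_def last_ConsL length_0_conv length_Suc_conv list.sel(1))
        then have "(\<sigma> a ! 0, \<sigma> a ! 1) \<in> E" using d(1) unfolding dpath_def
          by (metis One_nat_def Suc_lessI length_greater_0_conv)
        then have "\<sigma> a ! 0 < n" using dag unfolding is_dag_def by auto
        then show ?thesis using d(1) by (simp add: hd_conv_nth dpath_def)
      qed simp
      then show "\<sigma> a \<in> (\<Union>s\<in>insert a {..<n}. paths E s a)" using d by (auto simp: paths_def)
    next
      fix a assume "a \<notin> A" then show "\<sigma> a = undefined" using s by (auto simp: nps_def extensional_def)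
    qed
  qed
  moreover have "finite (Pi\<^sub>E A (\<lambda>a. \<Union>s\<in>insert a {..<n}. paths E s a))"
    using A finite_paths[OF dag] by (intro finite_PiE) auto
  ultimately show ?thesis by (rule finite_subset)
qed

lemma nps_remove_common:
  assumes acyc: "acyclic E" and vS: "v \<in> S" and vA: "v \<in> A"
    and H: "\<And>a. a \<in> A \<Longrightarrow> (v, a) \<notin> E\<^sup>+"
  shows "bij_betw (\<lambda>\<sigma>. restrict \<sigma> (A - {v})) (nps E S A) (nps E (S - {v}) (A - {v}))"
proof (rule bij_betw_byWitness[where f' = "\<lambda>\<tau>. \<tau>(v := [v])"])
  have sv: "\<sigma> v = [v]" if s: "\<sigma> \<in> nps E S A" for \<sigma>
  proof -
    obtain a where a: "a \<in> A" "hd (\<sigma> a) = v" using s vS unfolding nps_def by auto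
    have d: "dpath E (\<sigma> a)" "last (\<sigma> a) = a" using s a by (auto simp: nps_def)
    have "(v, a) \<in> E\<^sup>*" using dpath_rtrancl[OF d(1)] a d by simp
    then have "a = v" using H[OF a(1)] by (metis rtranclD)
    then show ?thesis using dpath_hd_last_eq[OF acyc d(1)] a d by simp
  qed
  show "\<forall>\<sigma>\<in>nps E S A. (restrict \<sigma> (A - {v}))(v := [v]) = \<sigma>"
  proof
    fix \<sigma> assume s: "\<sigma> \<in> nps E S A"
    show "(restrict \<sigma> (A - {v}))(v := [v]) = \<sigma>"
    proof
      fix x show "((restrict \<sigma> (A - {v}))(v := [v])) x = \<sigma> x"
        using s sv[OF s] by (cases "x = v") (auto simp: nps_def extensional_def)
    qed
  qed
  show "\<forall>\<tau>\<in>nps E (S - {v}) (A - {v}). restrict (\<tau>(v := [v])) (A - {v}) = \<tau>"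
  proof
    fix \<tau> assume t: "\<tau> \<in> nps E (S - {v}) (A - {v})"
    show "restrict (\<tau>(v := [v])) (A - {v}) = \<tau>"
    proof
      fix x show "restrict (\<tau>(v := [v])) (A - {v}) x = \<tau> x"
        using t by (cases "x \<in> A - {v}") (auto simp: nps_def extensional_def)
    qed
  qed
  show "(\<lambda>\<sigma>. restrict \<sigma> (A - {v})) ` nps E S A \<subseteq> nps E (S - {v}) (A - {v})"
  proof
    fix \<tau> assume "\<tau> \<in> (\<lambda>\<sigma>. restrict \<sigma> (A - {v})) ` nps E S A"
    then obtain \<sigma> where s: "\<sigma> \<in> nps E S A" and t: "\<tau> = restrict \<sigma> (A - {v})" by auto
    have s': "\<sigma> \<in> extensional A" "\<And>a. a \<in> A \<Longrightarrow> dpath E (\<sigma> a) \<and> last (\<sigma> a) = a"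
      "(\<lambda>a. hd (\<sigma> a)) ` A = S" "\<And>a b. a \<in> A \<Longrightarrow> b \<in> A \<Longrightarrow> a \<noteq> b \<Longrightarrow> set (\<sigma> a) \<inter> set (\<sigma> b) = {}"
      using s unfolding nps_def by auto
    have hdne: "hd (\<sigma> a) \<noteq> v" if a: "a \<in> A - {v}" for a
    proof
      assume "hd (\<sigma> a) = v"
      then have "v \<in> set (\<sigma> a)" using s'(2)[of a] a dpath_ne by (metis DiffD1 list.set_sel(1))
      then show False using s'(4)[of a v] a vA sv[OF s] by auto
    qed
    have "(\<lambda>a. hd (\<tau> a)) ` (A - {v}) = S - {v}"
    proof
      show "(\<lambda>a. hd (\<tau> a)) ` (A - {v}) \<subseteq> S - {v}" using t s'(3) hdne by auto
      show "S - {v} \<subseteq> (\<lambda>a. hd (\<tau> a)) ` (A - {v})"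
      proof
        fix x assume x: "x \<in> S - {v}"
        then obtain a where a: "a \<in> A" "x = hd (\<sigma> a)" using s'(3) by auto
        have "a \<noteq> v" using a x sv[OF s] by auto
        then show "x \<in> (\<lambda>a. hd (\<tau> a)) ` (A - {v})" using a t by auto
      qed
    qed
    then show "\<tau> \<in> nps E (S - {v}) (A - {v})"
      using t s' unfolding nps_def by auto
  qed
  show "(\<lambda>\<tau>. \<tau>(v := [v])) ` nps E (S - {v}) (A - {v}) \<subseteq> nps E S A"
  proof
    fix \<sigma> assume "\<sigma> \<in> (\<lambda>\<tau>. \<tau>(v := [v])) ` nps E (S - {v}) (A - {v})"
    then obtain \<tau> where t: "\<tau> \<in> nps E (S - {v}) (A - {v})" and s: "\<sigma> = \<tau>(v := [v])" by auto
    have t': "\<tau> \<in> extensional (A - {v})" "\<And>a. a \<in> A - {v} \<Longrightarrow> dpath E (\<tau> a) \<and> last (\<tau> a) = a"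
      "(\<lambda>a. hd (\<tau> a)) ` (A - {v}) = S - {v}"
      "\<And>a b. a \<in> A - {v} \<Longrightarrow> b \<in> A - {v} \<Longrightarrow> a \<noteq> b \<Longrightarrow> set (\<tau> a) \<inter> set (\<tau> b) = {}"
      using t unfolding nps_def by auto
    have vnot: "v \<notin> set (\<tau> a)" if a: "a \<in> A - {v}" for a
    proof
      assume "v \<in> set (\<tau> a)"
      then have "(v, a) \<in> E\<^sup>*" using dpath_mem_last t'(2)[OF a] by fastforce
      then have "(v, a) \<in> E\<^sup>+" using a by (metis DiffD2 rtranclD singletonI)
      then show False using H a by auto
    qed
    have ext: "\<sigma> \<in> extensional A" using t'(1) vA s by (auto simp: extensional_def)
    have paths: "\<forall>a\<in>A. dpath E (\<sigma> a) \<and> last (\<sigma> a) = a" using t'(2) s by auto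
    have hds: "(\<lambda>a. hd (\<sigma> a)) ` A = S"
    proof -
      have "(\<lambda>a. hd (\<sigma> a)) ` A = (\<lambda>a. hd (\<sigma> a)) ` insert v (A - {v})"
        using vA by (simp add: insert_absorb)
      also have "\<dots> = insert v ((\<lambda>a. hd (\<sigma> a)) ` (A - {v}))"
      proof -
        have "hd (\<sigma> v) = v" using s by simp
        then show ?thesis by (simp only: image_insert)
      qed
      also have "(\<lambda>a. hd (\<sigma> a)) ` (A - {v}) = (\<lambda>a. hd (\<tau> a)) ` (A - {v})"
        using s by (intro image_cong) auto
      finally show ?thesis using t'(3) vS by auto
    qed
    have disj: "\<forall>a\<in>A. \<forall>b\<in>A. a \<noteq> b \<longrightarrow> set (\<sigma> a) \<inter> set (\<sigma> b) = {}"
    proof (intro ballI impI)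
      fix a b assume ab: "a \<in> A" "b \<in> A" "a \<noteq> b"
      show "set (\<sigma> a) \<inter> set (\<sigma> b) = {}"
      proof (cases "a = v")
        case True then show ?thesis using ab s vnot[of b] by auto
      next
        case a: False
        show ?thesis
        proof (cases "b = v")
          case True then show ?thesis using ab s vnot[of a] by auto
        next
          case False then show ?thesis using ab a s t'(4)[of a b] by auto
        qed
      qed
    qed
    show "\<sigma> \<in> nps E S A" unfolding nps_def using ext paths hds disj by blast
  qed
qed

lemma nps_D:
  assumes "\<sigma> \<in> nps E S A"
  shows "\<sigma> \<in> extensional A" "\<And>a. a \<in> A \<Longrightarrow> dpath E (\<sigma> a)" "\<And>a. a \<in> A \<Longrightarrow> last (\<sigma> a) = a"
    "(\<lambda>a. hd (\<sigma> a)) ` A = S" "\<And>a b. a \<in> A \<Longrightarrow> b \<in> A \<Longrightarrow> a \<noteq> b \<Longrightarrow> set (\<sigma> a) \<inter> set (\<sigma> b) = {}"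
  using assms unfolding nps_def by auto

lemma nps_I:
  assumes "\<sigma> \<in> extensional A" "\<And>a. a \<in> A \<Longrightarrow> dpath E (\<sigma> a)" "\<And>a. a \<in> A \<Longrightarrow> last (\<sigma> a) = a"
    "(\<lambda>a. hd (\<sigma> a)) ` A = S" "\<And>a b. a \<in> A \<Longrightarrow> b \<in> A \<Longrightarrow> a \<noteq> b \<Longrightarrow> set (\<sigma> a) \<inter> set (\<sigma> b) = {}"
  shows "\<sigma> \<in> nps E S A"
  using assms unfolding nps_def by auto

definition ext_fwd :: "nat set \<Rightarrow> nat \<Rightarrow> (nat \<Rightarrow> nat list) \<Rightarrow> nat \<times> (nat \<Rightarrow> nat list)" where
  "ext_fwd A v \<sigma> = (last (butlast (\<sigma> v)), (restrict \<sigma> (A - {v}))(last (butlast (\<sigma> v)) := butlast (\<sigma> v)))"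

definition ext_bwd :: "nat set \<Rightarrow> nat \<Rightarrow> nat \<times> (nat \<Rightarrow> nat list) \<Rightarrow> (nat \<Rightarrow> nat list)" where
  "ext_bwd A v pt = (restrict (snd pt) (A - {v}))(v := snd pt (fst pt) @ [v])"

lemma nps_extend:
  assumes acyc: "acyclic E" and vS: "v \<notin> S" and vA: "v \<in> A"
    and H: "\<And>a. a \<in> A \<Longrightarrow> (v, a) \<notin> E\<^sup>+"
  shows "bij_betw (ext_fwd A v) (nps E S A)
           (Sigma ({p. (p, v) \<in> E} - A) (\<lambda>p. nps E S (insert p (A - {v}))))"
proof (rule bij_betw_byWitness[where f' = "ext_bwd A v"])
  let ?T = "Sigma ({p. (p, v) \<in> E} - A) (\<lambda>p. nps E S (insert p (A - {v})))"
  have fwd: "butlast (\<sigma> v) \<noteq> [] \<and> \<sigma> v = butlast (\<sigma> v) @ [v] \<and> dpath E (butlast (\<sigma> v)) \<and>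
      (last (butlast (\<sigma> v)), v) \<in> E \<and> last (butlast (\<sigma> v)) \<notin> A \<and> hd (butlast (\<sigma> v)) = hd (\<sigma> v)"
    if s: "\<sigma> \<in> nps E S A" for \<sigma>
  proof -
    let ?q = "\<sigma> v" let ?b = "butlast (\<sigma> v)"
    have d: "dpath E ?q" "last ?q = v" using nps_D(2,3)[OF s vA] by auto
    have hq: "hd ?q \<in> S" using nps_D(4)[OF s] vA by auto
    have qne: "?q \<noteq> []" using d dpath_ne by auto
    have qe: "?q = ?b @ [v]" using qne d by (metis append_butlast_last_id)
    have bne: "?b \<noteq> []"
    proof
      assume "?b = []" then have "?q = [v]" using qe by simp
      then show False using hq vS by simp
    qed
    have db: "dpath E ?b" "(last ?b, v) \<in> E" using d(1) qe bne dpath_append1[of E ?b v] by auto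
    have pA: "last ?b \<notin> A"
    proof
      assume pA: "last ?b \<in> A"
      have "last ?b \<noteq> v"
      proof
        assume "last ?b = v" then have "(v, v) \<in> E\<^sup>+" using db by auto
        then show False using acyc by (simp add: acyclic_def)
      qed
      moreover have "last ?b \<in> set ?q" using bne qe by (metis last_in_set in_set_butlastD)
      moreover have "last ?b \<in> set (\<sigma> (last ?b))"
        using nps_D(2,3)[OF s pA] dpath_ne by (metis last_in_set)
      ultimately show False using nps_D(5)[OF s vA pA] by auto
    qed
    have "hd ?b = hd ?q" using qe bne by (metis hd_append2)
    then show ?thesis using bne qe db pA by simp
  qed
  have vnot: "v \<notin> set (\<tau> a)" if t: "\<tau> \<in> nps E S A'" and a: "a \<in> A'" and A': "A' \<subseteq> A \<union> {x. (x, v) \<in> E}"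
    and av: "a \<noteq> v" for \<tau> A' a
  proof
    assume "v \<in> set (\<tau> a)"
    then have "(v, a) \<in> E\<^sup>*" using dpath_mem_last nps_D(2,3)[OF t a] by fastforce
    then have va: "(v, a) \<in> E\<^sup>+" using av by (metis rtranclD)
    show False
    proof (cases "a \<in> A")
      case True then show False using H va by auto
    next
      case False then have "(a, v) \<in> E" using a A' by auto
      then have "(v, v) \<in> E\<^sup>+" using va by auto
      then show False using acyc by (simp add: acyclic_def)
    qed
  qed
  show "\<forall>\<sigma>\<in>nps E S A. ext_bwd A v (ext_fwd A v \<sigma>) = \<sigma>"
  proof
    fix \<sigma> assume s: "\<sigma> \<in> nps E S A"
    note f = fwd[OF s]
    show "ext_bwd A v (ext_fwd A v \<sigma>) = \<sigma>"
    proof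
      fix x
      show "ext_bwd A v (ext_fwd A v \<sigma>) x = \<sigma> x"
      proof (cases "x = v")
        case True then show ?thesis using f by (simp add: ext_bwd_def ext_fwd_def)
      next
        case False
        then show ?thesis using f nps_D(1)[OF s]
          by (cases "x \<in> A") (auto simp: ext_bwd_def ext_fwd_def extensional_def)
      qed
    qed
  qed
  show "\<forall>pt\<in>?T. ext_fwd A v (ext_bwd A v pt) = pt"
  proof
    fix pt assume pt: "pt \<in> ?T"
    then obtain p \<tau> where pt': "pt = (p, \<tau>)" "(p, v) \<in> E" "p \<notin> A" "\<tau> \<in> nps E S (insert p (A - {v}))"
      by auto
    have tp: "dpath E (\<tau> p)" "last (\<tau> p) = p" using nps_D(2,3)[OF pt'(4)] by auto
    have bw: "ext_bwd A v pt v = \<tau> p @ [v]" using pt' by (simp add: ext_bwd_def)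
    have "butlast (ext_bwd A v pt v) = \<tau> p" using bw by simp
    then have lb: "last (butlast (ext_bwd A v pt v)) = p" using tp by simp
    show "ext_fwd A v (ext_bwd A v pt) = pt"
    proof -
      have "(restrict (ext_bwd A v pt) (A - {v}))(p := \<tau> p) = \<tau>"
      proof
        fix x show "((restrict (ext_bwd A v pt) (A - {v}))(p := \<tau> p)) x = \<tau> x"
          using pt' nps_D(1)[OF pt'(4)] by (cases "x = p"; cases "x \<in> A - {v}")
            (auto simp: ext_bwd_def extensional_def)
      qed
      then show ?thesis unfolding ext_fwd_def lb using \<open>butlast (ext_bwd A v pt v) = \<tau> p\<close> pt'(1)
        by simp
    qed
  qed
  show "ext_fwd A v ` nps E S A \<subseteq> ?T"
  proof
    fix pt assume "pt \<in> ext_fwd A v ` nps E S A"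
    then obtain \<sigma> where s: "\<sigma> \<in> nps E S A" and pt: "pt = ext_fwd A v \<sigma>" by auto
    note f = fwd[OF s]
    let ?b = "butlast (\<sigma> v)" let ?p = "last (butlast (\<sigma> v))"
    let ?\<sigma>' = "(restrict \<sigma> (A - {v}))(?p := ?b)"
    have pnot: "?p \<notin> A - {v}" using f by auto
    have val: "?\<sigma>' a = \<sigma> a" if "a \<in> A - {v}" for a using that pnot by auto
    have "?\<sigma>' \<in> nps E S (insert ?p (A - {v}))"
    proof (rule nps_I)
      show "?\<sigma>' \<in> extensional (insert ?p (A - {v}))" by (auto simp: extensional_def)
      show "dpath E (?\<sigma>' a)" "last (?\<sigma>' a) = a" if "a \<in> insert ?p (A - {v})" for a
        using that f nps_D(2,3)[OF s] val by (cases "a = ?p"; auto)+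
      show "(\<lambda>a. hd (?\<sigma>' a)) ` insert ?p (A - {v}) = S"
      proof -
        have "(\<lambda>a. hd (?\<sigma>' a)) ` insert ?p (A - {v}) = insert (hd ?b) ((\<lambda>a. hd (?\<sigma>' a)) ` (A - {v}))"
          by simp
        also have "(\<lambda>a. hd (?\<sigma>' a)) ` (A - {v}) = (\<lambda>a. hd (\<sigma> a)) ` (A - {v})"
          using val by (intro image_cong) auto
        also have "hd ?b = hd (\<sigma> v)" using f by simp
        also have "insert (hd (\<sigma> v)) ((\<lambda>a. hd (\<sigma> a)) ` (A - {v})) = (\<lambda>a. hd (\<sigma> a)) ` A"
          using vA by blast
        finally show ?thesis using nps_D(4)[OF s] by (rule trans)
      qed
      show "set (?\<sigma>' a) \<inter> set (?\<sigma>' c) = {}"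
        if ac: "a \<in> insert ?p (A - {v})" "c \<in> insert ?p (A - {v})" "a \<noteq> c" for a c
      proof -
        have sb: "set ?b \<subseteq> set (\<sigma> v)" by (meson in_set_butlastD subsetI)
        show ?thesis
        proof (cases "a = ?p")
          case True
          then have "c \<in> A - {v}" using ac by auto
          then show ?thesis using True val nps_D(5)[OF s vA, of c] sb by auto
        next
          case a: False
          show ?thesis
          proof (cases "c = ?p")
            case True
            then have "a \<in> A - {v}" using ac a by auto
            then show ?thesis using True val nps_D(5)[OF s vA, of a] sb by auto
          next
            case False
            then have "a \<in> A - {v}" "c \<in> A - {v}" using ac a by auto
            then show ?thesis using val nps_D(5)[OF s, of a c] ac by auto
          qed
        qed
      qed
    qed
    then show "pt \<in> ?T" using pt f by (simp add: ext_fwd_def)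
  qed
  show "ext_bwd A v ` ?T \<subseteq> nps E S A"
  proof
    fix \<sigma> assume "\<sigma> \<in> ext_bwd A v ` ?T"
    then obtain p \<tau> where pt': "\<sigma> = ext_bwd A v (p, \<tau>)" "(p, v) \<in> E" "p \<notin> A"
      "\<tau> \<in> nps E S (insert p (A - {v}))" by auto
    have sv: "\<sigma> v = \<tau> p @ [v]" using pt' by (simp add: ext_bwd_def)
    have so: "\<sigma> a = \<tau> a" if "a \<in> A - {v}" for a using pt' that by (simp add: ext_bwd_def)
    have A': "insert p (A - {v}) \<subseteq> A \<union> {x. (x, v) \<in> E}" using pt' by auto
    have tp: "dpath E (\<tau> p)" "last (\<tau> p) = p" using nps_D(2,3)[OF pt'(4)] by auto
    have pv: "p \<noteq> v" using pt' vA by auto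
    show "\<sigma> \<in> nps E S A"
    proof (rule nps_I)
      show "\<sigma> \<in> extensional A" using pt' nps_D(1)[OF pt'(4)] vA
        by (auto simp: ext_bwd_def extensional_def)
      show "dpath E (\<sigma> a)" "last (\<sigma> a) = a" if a: "a \<in> A" for a
      proof -
        have "dpath E (\<sigma> a) \<and> last (\<sigma> a) = a"
        proof (cases "a = v")
          case True
          have "dpath E (\<tau> p @ [v])" using tp pt'(2) dpath_append1 by auto
          then show ?thesis using True sv by simp
        next
          case False then show ?thesis using so[of a] a nps_D(2,3)[OF pt'(4), of a] by auto
        qed
        then show "dpath E (\<sigma> a)" "last (\<sigma> a) = a" by auto
      qed
      show "(\<lambda>a. hd (\<sigma> a)) ` A = S"
      proof -
        have "(\<lambda>a. hd (\<sigma> a)) ` A = (\<lambda>a. hd (\<sigma> a)) ` insert v (A - {v})"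
          using vA by (simp add: insert_absorb)
        also have "\<dots> = insert (hd (\<sigma> v)) ((\<lambda>a. hd (\<sigma> a)) ` (A - {v}))" by (simp only: image_insert)
        also have "hd (\<sigma> v) = hd (\<tau> p)" using sv tp dpath_ne by auto
        also have "(\<lambda>a. hd (\<sigma> a)) ` (A - {v}) = (\<lambda>a. hd (\<tau> a)) ` (A - {v})"
          using so by (intro image_cong) auto
        also have "insert (hd (\<tau> p)) ((\<lambda>a. hd (\<tau> a)) ` (A - {v})) = (\<lambda>a. hd (\<tau> a)) ` insert p (A - {v})"
          by simp
        finally show ?thesis using nps_D(4)[OF pt'(4)] by (rule trans)
      qed
      show "set (\<sigma> a) \<inter> set (\<sigma> c) = {}" if ac: "a \<in> A" "c \<in> A" "a \<noteq> c" for a c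
      proof -
        have key: "set (\<sigma> v) \<inter> set (\<sigma> x) = {}" if x: "x \<in> A - {v}" for x
        proof -
          have "set (\<tau> p) \<inter> set (\<tau> x) = {}" using nps_D(5)[OF pt'(4), of p x] x pt'(3) by auto
          moreover have "v \<notin> set (\<tau> x)" using vnot[OF pt'(4) _ A', of x] x by auto
          ultimately show ?thesis using sv so[OF x] by auto
        qed
        show ?thesis
        proof (cases "a = v")
          case True then show ?thesis using key[of c] ac by auto
        next
          case a: False
          show ?thesis
          proof (cases "c = v")
            case True then show ?thesis using key[of a] ac a by auto
          next
            case False then show ?thesis using so[of a] so[of c] ac a nps_D(5)[OF pt'(4), of a c] by auto
          qed
        qed
      qed
    qed
  qed
qed

definition WA :: "(nat \<times> nat) set \<Rightarrow> nat set \<Rightarrow> var set" where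
  "WA E A = {Lam x y | x y. \<exists>a\<in>A. (y, a) \<in> E\<^sup>*}"

lemma goodp_pm: "dpath E p \<Longrightarrow> last p \<in> A \<Longrightarrow> goodp (WA E A) (pm p)"
proof (induction p rule: pm.induct)
  case (1 x y r)
  have d: "dpath E (y # r)" using "1.prems" by simp
  have l: "last (y # r) \<in> A" using "1.prems" by simp
  have "(y, last (y # r)) \<in> E\<^sup>*" using dpath_mem_last[OF d] by simp
  then have "Lam x y \<in> WA E A" using l unfolding WA_def by blast
  then show ?case using "1.IH"[OF d l] by (simp add: goodp_mult goodp_Var)
qed simp_all

lemma goodp_Lp: "a \<in> A \<Longrightarrow> goodp (WA E A) (Lp E s a)"
  unfolding Lp_def by (rule goodp_sum) (auto simp: paths_def intro: goodp_pm)

lemma goodp_Dt_Lp: "goodp (WA E (\<beta> ` {..<k})) (Dt (Lp E) \<alpha> \<beta> k)"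
  by (rule goodp_Dt) (auto intro: goodp_Lp)

definition hcount :: "(nat \<times> nat) set \<Rightarrow> nat \<Rightarrow> nat" where
  "hcount E a = card {x. (x, a) \<in> E\<^sup>+}"

lemma finite_anc: "is_dag n E \<Longrightarrow> finite {x. (x, a) \<in> E\<^sup>+}"
proof -
  assume dag: "is_dag n E"
  have "{x. (x, a) \<in> E\<^sup>+} \<subseteq> {..<n}"
  proof
    fix x assume "x \<in> {x. (x, a) \<in> E\<^sup>+}"
    then obtain y where "(x, y) \<in> E" by (auto elim: converse_tranclE)
    then show "x \<in> {..<n}" using dag unfolding is_dag_def by auto
  qed
  then show ?thesis by (rule finite_subset) simp
qed

lemma hcount_lt:
  assumes dag: "is_dag n E" and e: "(p, v) \<in> E\<^sup>+"
  shows "hcount E p < hcount E v"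
proof -
  have "insert p {x. (x, p) \<in> E\<^sup>+} \<subseteq> {x. (x, v) \<in> E\<^sup>+}" using e by auto
  moreover have "p \<notin> {x. (x, p) \<in> E\<^sup>+}" using dag by (auto simp: is_dag_def acyclic_def)
  ultimately have "card (insert p {x. (x, p) \<in> E\<^sup>+}) \<le> card {x. (x, v) \<in> E\<^sup>+}"
    using finite_anc[OF dag] by (intro card_mono) auto
  then show ?thesis using finite_anc[OF dag, of p] \<open>p \<notin> _\<close> by (simp add: hcount_def)
qed

lemma Dt_mat_carrier: "mat k k (\<lambda>(x, y). M (\<alpha> x) (\<beta> y)) \<in> carrier_mat k k" by simp

lemma mat_delete_Dt:
  assumes "x0 < k" "y0 < k"
  shows "mat_delete (mat k k (\<lambda>(x, y). M (\<alpha> x) (\<beta> y))) x0 y0 =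
    mat (k - 1) (k - 1) (\<lambda>(x, y). M (\<alpha> (insert_index x0 x)) (\<beta> (insert_index y0 y)))"
  using assms by (intro eq_matI) (auto simp: mat_delete_def insert_index_def)

lemma Dt_row_unit:
  assumes x0: "x0 < k" and y0: "y0 < k"
    and row: "\<And>j. j < k \<Longrightarrow> M (\<alpha> x0) (\<beta> j) = (if j = y0 then 1 else 0)"
  shows "Dt M \<alpha> \<beta> k = (-1) ^ (x0 + y0) *
     Dt M (\<lambda>i. \<alpha> (insert_index x0 i)) (\<lambda>j. \<beta> (insert_index y0 j)) (k - 1)"
proof -
  let ?A = "mat k k (\<lambda>(x, y). M (\<alpha> x) (\<beta> y))"
  have "det ?A = (\<Sum>j<k. ?A $$ (x0, j) * cofactor ?A x0 j)"
    by (rule laplace_expansion_row[OF Dt_mat_carrier x0])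
  also have "\<dots> = (\<Sum>j<k. (if j = y0 then cofactor ?A x0 j else 0))"
    by (rule sum.cong) (use x0 row in auto)
  also have "\<dots> = cofactor ?A x0 y0" using y0 by simp
  also have "\<dots> = (-1) ^ (x0 + y0) * Dt M (\<lambda>i. \<alpha> (insert_index x0 i)) (\<lambda>j. \<beta> (insert_index y0 j)) (k - 1)"
    unfolding cofactor_def Dt_def mat_delete_Dt[OF x0 y0] by simp
  finally show ?thesis unfolding Dt_def .
qed

lemma Dt_col_expand:
  fixes M :: "nat \<Rightarrow> nat \<Rightarrow> 'a::comm_ring_1"
  assumes y0: "y0 < k" and fin: "finite P"
    and col: "\<And>i. i < k \<Longrightarrow> M (\<alpha> i) (\<beta> y0) = (\<Sum>p\<in>P. M (\<alpha> i) p * c p)"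
  shows "Dt M \<alpha> \<beta> k = (\<Sum>p\<in>P. c p * Dt M \<alpha> (\<beta>(y0 := p)) k)"
proof -
  let ?A = "mat k k (\<lambda>(x, y). M (\<alpha> x) (\<beta> y))"
  let ?Ap = "\<lambda>p. mat k k (\<lambda>(x, y). M (\<alpha> x) ((\<beta>(y0 := p)) y))"
  have cof: "cofactor (?Ap p) i y0 = cofactor ?A i y0" if "i < k" for i p
  proof -
    have "mat_delete (?Ap p) i y0 = mat_delete ?A i y0"
      unfolding mat_delete_def by (rule eq_matI) auto
    then show ?thesis unfolding cofactor_def by simp
  qed
  have "det ?A = (\<Sum>i<k. ?A $$ (i, y0) * cofactor ?A i y0)"
    by (rule laplace_expansion_column[OF Dt_mat_carrier y0])
  also have "\<dots> = (\<Sum>i<k. \<Sum>p\<in>P. c p * (M (\<alpha> i) p * cofactor ?A i y0))"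
    by (rule sum.cong) (use y0 col in \<open>auto simp: sum_distrib_right ac_simps\<close>)
  also have "\<dots> = (\<Sum>p\<in>P. c p * (\<Sum>i<k. M (\<alpha> i) p * cofactor ?A i y0))"
    by (subst sum.swap) (simp add: sum_distrib_left)
  also have "\<dots> = (\<Sum>p\<in>P. c p * det (?Ap p))"
  proof (rule sum.cong[OF refl])
    fix p
    have "det (?Ap p) = (\<Sum>i<k. ?Ap p $$ (i, y0) * cofactor (?Ap p) i y0)"
      by (rule laplace_expansion_column[OF Dt_mat_carrier y0])
    also have "\<dots> = (\<Sum>i<k. M (\<alpha> i) p * cofactor ?A i y0)"
      by (rule sum.cong) (use y0 cof in auto)
    finally show "c p * (\<Sum>i<k. M (\<alpha> i) p * cofactor ?A i y0) = c p * det (?Ap p)" by simp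
  qed
  finally show ?thesis unfolding Dt_def .
qed

lemma Dt_identical_cols:
  assumes "y0 < k" "y1 < k" "y0 \<noteq> y1" "\<beta> y0 = \<beta> y1"
  shows "Dt M \<alpha> \<beta> k = 0"
  unfolding Dt_def
  by (rule det_identical_columns[OF Dt_mat_carrier assms(3,1,2)]) (auto simp: assms intro!: eq_vecI)

lemma insert_index_image: "y0 < k \<Longrightarrow> insert_index y0 ` {..<k - 1} = {..<k} - {y0}"
proof
  assume y0: "y0 < k"
  show "insert_index y0 ` {..<k - 1} \<subseteq> {..<k} - {y0}" by (auto simp: insert_index_def)
  show "{..<k} - {y0} \<subseteq> insert_index y0 ` {..<k - 1}"
  proof
    fix j assume j: "j \<in> {..<k} - {y0}"
    show "j \<in> insert_index y0 ` {..<k - 1}"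
    proof (cases "j < y0")
      case True then have "j = insert_index y0 j" by (simp add: insert_index_def)
      moreover have "j < k - 1" using True y0 by simp
      ultimately show ?thesis by blast
    next
      case False then have "j = insert_index y0 (j - 1)" "j - 1 < k - 1" using j by (auto simp: insert_index_def)
      then show ?thesis by blast
    qed
  qed
qed

lemma insert_index_inj: "inj_on (insert_index y0) A"
  by (rule inj_onI) (auto simp: insert_index_def split: if_splits)

lemma lgv_count:
  assumes dag: "is_dag n E"
  shows "inj_on \<alpha> {..<k} \<Longrightarrow> \<alpha> ` {..<k} \<subseteq> {..<n} \<Longrightarrow> inj_on \<beta> {..<k} \<Longrightarrow> \<beta> ` {..<k} \<subseteq> {..<n} \<Longrightarrow>
    card (pkeys (Dt (Lp E) \<alpha> \<beta> k)) = card (nps E (\<alpha> ` {..<k}) (\<beta> ` {..<k}))"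
proof (induction "k + (\<Sum>i<k. hcount E (\<beta> i))" arbitrary: k \<alpha> \<beta> rule: less_induct)
  case less
  have acyc: "acyclic E" using dag by (simp add: is_dag_def)
  show ?case
  proof (cases "k = 0")
    case True
    have "Dt (Lp E) \<alpha> \<beta> k = 1" using True by (simp add: Dt_def)
    then show ?thesis using True by (simp add: nps_empty)
  next
    case False
    define A where "A = \<beta> ` {..<k}"
    define S where "S = \<alpha> ` {..<k}"
    let ?hb = "\<lambda>y. hcount E (\<beta> y)"
    have ne: "?hb ` {..<k} \<noteq> {}" using False by auto
    obtain y0 where y0: "y0 < k" "?hb y0 = Max (?hb ` {..<k})"
      using Max_in[OF _ ne] by auto
    have ymax: "?hb y \<le> ?hb y0" if "y < k" for y using y0 that by simp
    define v where "v = \<beta> y0"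
    have vA: "v \<in> A" using y0 by (simp add: A_def v_def)
    have H: "(v, a) \<notin> E\<^sup>+" if a: "a \<in> A" for a
    proof
      assume "(v, a) \<in> E\<^sup>+"
      then have "hcount E v < hcount E a" by (rule hcount_lt[OF dag])
      moreover obtain y where "y < k" "a = \<beta> y" using a by (auto simp: A_def)
      ultimately show False using ymax v_def by fastforce
    qed
    show ?thesis
    proof (cases "v \<in> S")
      case True
      then obtain x0 where x0: "x0 < k" "\<alpha> x0 = v" by (auto simp: S_def)
      have row: "Lp E (\<alpha> x0) (\<beta> j) = (if j = y0 then 1 else 0)" if j: "j < k" for j
      proof (cases "j = y0")
        case True then show ?thesis using x0 v_def acyc by (simp add: Lp_refl)
      next
        case False
        then have "\<beta> j \<noteq> v" using less.prems(3) j y0 v_def by (auto dest: inj_onD)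
        moreover have "(v, \<beta> j) \<notin> E\<^sup>+" using H j by (auto simp: A_def)
        ultimately have "(v, \<beta> j) \<notin> E\<^sup>*" by (metis rtranclD)
        then show ?thesis using False x0 by (simp add: Lp_zero)
      qed
      let ?\<alpha>' = "\<lambda>i. \<alpha> (insert_index x0 i)" and ?\<beta>' = "\<lambda>j. \<beta> (insert_index y0 j)"
      have "Dt (Lp E) \<alpha> \<beta> k = (-1) ^ (x0 + y0) * Dt (Lp E) ?\<alpha>' ?\<beta>' (k - 1)"
        by (rule Dt_row_unit[where M = "Lp E" and \<alpha> = \<alpha> and \<beta> = \<beta>, OF x0(1) y0(1) row])
      then have c1: "card (pkeys (Dt (Lp E) \<alpha> \<beta> k)) = card (pkeys (Dt (Lp E) ?\<alpha>' ?\<beta>' (k - 1)))"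
        by (simp add: keys_neg_one_pow)
      have imx: "insert_index x0 ` {..<k - 1} = {..<k} - {x0}" by (rule insert_index_image[OF x0(1)])
      have imy: "insert_index y0 ` {..<k - 1} = {..<k} - {y0}" by (rule insert_index_image[OF y0(1)])
      have ia: "?\<alpha>' ` {..<k - 1} = S - {v}"
      proof -
        have "?\<alpha>' ` {..<k - 1} = \<alpha> ` ({..<k} - {x0})" using imx by (simp add: image_image[symmetric])
        also have "\<dots> = S - {v}" using less.prems(1) x0 unfolding S_def by (auto simp: inj_on_image_set_diff)
        finally show ?thesis .
      qed
      have ib: "?\<beta>' ` {..<k - 1} = A - {v}"
      proof -
        have "?\<beta>' ` {..<k - 1} = \<beta> ` ({..<k} - {y0})" using imy by (simp add: image_image[symmetric])
        also have "\<dots> = A - {v}" using less.prems(3) y0 v_def unfolding A_def by (auto simp: inj_on_image_set_diff)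
        finally show ?thesis .
      qed
      have "inj_on (\<alpha> \<circ> insert_index x0) {..<k - 1}"
        by (rule comp_inj_on[OF insert_index_inj]) (use less.prems(1) imx inj_on_subset in fastforce)
      then have inja: "inj_on ?\<alpha>' {..<k - 1}" by (simp add: o_def)
      have "inj_on (\<beta> \<circ> insert_index y0) {..<k - 1}"
        by (rule comp_inj_on[OF insert_index_inj]) (use less.prems(3) imy inj_on_subset in fastforce)
      then have injb: "inj_on ?\<beta>' {..<k - 1}" by (simp add: o_def)
      have meas: "(k - 1) + (\<Sum>i<k - 1. hcount E (?\<beta>' i)) < k + (\<Sum>i<k. hcount E (\<beta> i))"
      proof -
        have "(\<Sum>i<k - 1. hcount E (?\<beta>' i)) = (\<Sum>j\<in>insert_index y0 ` {..<k - 1}. hcount E (\<beta> j))"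
          by (rule sum.reindex[symmetric, unfolded o_def]) (rule insert_index_inj)
        also have "\<dots> = (\<Sum>j\<in>{..<k} - {y0}. hcount E (\<beta> j))" using imy by simp
        also have "\<dots> \<le> (\<Sum>j<k. hcount E (\<beta> j))" by (rule sum_mono2) auto
        finally show ?thesis using False by simp
      qed
      have IH: "card (pkeys (Dt (Lp E) ?\<alpha>' ?\<beta>' (k - 1))) = card (nps E (?\<alpha>' ` {..<k - 1}) (?\<beta>' ` {..<k - 1}))"
        by (rule less.hyps[OF meas inja _ injb]) (use less.prems ia ib S_def A_def in auto)
      have "card (nps E S A) = card (nps E (S - {v}) (A - {v}))"
        by (rule bij_betw_same_card[OF nps_remove_common[OF acyc True vA H]])
      then show ?thesis using c1 IH ia ib S_def A_def by simp
    next
      case vS: False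
      let ?pa = "{p. (p, v) \<in> E}"
      let ?P = "?pa - A"
      have finpa: "finite ?pa" using dag unfolding is_dag_def by (rule_tac finite_subset[of _ "{..<n}"]) auto
      have col: "Lp E (\<alpha> i) (\<beta> y0) = (\<Sum>p\<in>?pa. Lp E (\<alpha> i) p * Var (Lam p v))" if i: "i < k" for i
      proof -
        have "\<alpha> i \<noteq> v" using vS i by (auto simp: S_def)
        then show ?thesis using Lp_last[OF dag] v_def by simp
      qed
      have "Dt (Lp E) \<alpha> \<beta> k = (\<Sum>p\<in>?pa. Var (Lam p v) * Dt (Lp E) \<alpha> (\<beta>(y0 := p)) k)"
        by (rule Dt_col_expand[where M = "Lp E" and \<alpha> = \<alpha> and \<beta> = \<beta> and c = "\<lambda>p. Var (Lam p v)", OF y0(1) finpa col])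
      also have "\<dots> = (\<Sum>p\<in>?P. Var (Lam p v) * Dt (Lp E) \<alpha> (\<beta>(y0 := p)) k)"
      proof (rule sum.mono_neutral_right)
        show "finite ?pa" by (rule finpa)
        show "?P \<subseteq> ?pa" by auto
        show "\<forall>p\<in>?pa - ?P. Var (Lam p v) * Dt (Lp E) \<alpha> (\<beta>(y0 := p)) k = 0"
        proof
          fix p assume p: "p \<in> ?pa - ?P"
          then obtain y1 where y1: "y1 < k" "\<beta> y1 = p" by (auto simp: A_def)
          have "p \<noteq> v"
          proof
            assume "p = v" then have "(v, v) \<in> E\<^sup>+" using p by auto
            then show False using acyc by (simp add: acyclic_def)
          qed
          then have "y1 \<noteq> y0" using y1 v_def by auto
          then have "Dt (Lp E) \<alpha> (\<beta>(y0 := p)) k = 0"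
            by (intro Dt_identical_cols[OF y0(1) y1(1)]) (use y1 in auto)
          then show "Var (Lam p v) * Dt (Lp E) \<alpha> (\<beta>(y0 := p)) k = 0" by simp
        qed
      qed
      finally have Dsum: "Dt (Lp E) \<alpha> \<beta> k = (\<Sum>p\<in>?P. Var (Lam p v) * Dt (Lp E) \<alpha> (\<beta>(y0 := p)) k)" .
      have imp: "(\<beta>(y0 := p)) ` {..<k} = insert p (A - {v})" if p: "p \<in> ?P" for p
      proof -
        have "(\<beta>(y0 := p)) ` {..<k} = insert p (\<beta> ` ({..<k} - {y0}))"
          using y0 by (auto simp: image_iff)
        also have "\<beta> ` ({..<k} - {y0}) = A - {v}"
          using less.prems(3) y0 v_def unfolding A_def by (auto simp: inj_on_image_set_diff)
        finally show ?thesis .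
      qed
      have noW: "Lam q v \<notin> WA E (insert p (A - {v}))" if p: "p \<in> ?P" for p q
      proof
        assume "Lam q v \<in> WA E (insert p (A - {v}))"
        then obtain a where a: "a \<in> insert p (A - {v})" "(v, a) \<in> E\<^sup>*" by (auto simp: WA_def)
        show False
        proof (cases "a = p")
          case True
          then have "(v, v) \<in> E\<^sup>+" using a p by auto
          then show False using acyc by (simp add: acyclic_def)
        next
          case False
          then have "a \<in> A" "a \<noteq> v" using a by auto
          then have "(v, a) \<in> E\<^sup>+" using a(2) by (metis rtranclD)
          then show False using H \<open>a \<in> A\<close> by auto
        qed
      qed
      have zero_at: "plookup m (Lam q v) = 0" if p: "p \<in> ?P" and m: "m \<in> pkeys (Dt (Lp E) \<alpha> (\<beta>(y0 := p)) k)" for p q m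
      proof -
        have "goodp (WA E (insert p (A - {v}))) (Dt (Lp E) \<alpha> (\<beta>(y0 := p)) k)"
          using goodp_Dt_Lp[of E "\<beta>(y0 := p)" k \<alpha>] imp[OF p] by simp
        then have "pkeys m \<subseteq> WA E (insert p (A - {v}))" using m unfolding goodp_def by blast
        then show ?thesis using noW[OF p, of q] by (auto simp: in_keys_iff)
      qed
      have disj: "pkeys (Var (Lam p v) * Dt (Lp E) \<alpha> (\<beta>(y0 := p)) k) \<inter>
                  pkeys (Var (Lam p' v) * Dt (Lp E) \<alpha> (\<beta>(y0 := p')) k) = {}"
        if pp: "p \<in> ?P" "p' \<in> ?P" "p \<noteq> p'" for p p'
      proof -
        have "plookup x (Lam p' v) = 0" if x: "x \<in> pkeys (Var (Lam p v) * Dt (Lp E) \<alpha> (\<beta>(y0 := p)) k)" for x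
        proof -
          obtain m where m: "m \<in> pkeys (Dt (Lp E) \<alpha> (\<beta>(y0 := p)) k)" "x = Poly_Mapping.single (Lam p v) 1 + m"
            using x keys_Var_mult by auto
          then show ?thesis using zero_at[OF pp(1) m(1)] pp(3) by (simp add: lookup_add lookup_single)
        qed
        moreover have "plookup x (Lam p' v) = 1" if x: "x \<in> pkeys (Var (Lam p' v) * Dt (Lp E) \<alpha> (\<beta>(y0 := p')) k)" for x
        proof -
          obtain m where m: "m \<in> pkeys (Dt (Lp E) \<alpha> (\<beta>(y0 := p')) k)" "x = Poly_Mapping.single (Lam p' v) 1 + m"
            using x keys_Var_mult by auto
          then show ?thesis using zero_at[OF pp(2) m(1)] by (simp add: lookup_add)
        qed
        ultimately show ?thesis by fastforce
      qed
      have finP: "finite ?P" using finpa by auto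
      have c1: "card (pkeys (Dt (Lp E) \<alpha> \<beta> k)) = (\<Sum>p\<in>?P. card (pkeys (Dt (Lp E) \<alpha> (\<beta>(y0 := p)) k)))"
        unfolding Dsum by (subst card_keys_sum_disjoint[OF finP disj]) (simp_all add: card_keys_Var_mult)
      have IHp: "card (pkeys (Dt (Lp E) \<alpha> (\<beta>(y0 := p)) k)) = card (nps E S (insert p (A - {v})))"
        if p: "p \<in> ?P" for p
      proof -
        have hp: "hcount E p < hcount E v" using p hcount_lt[OF dag, of p v] by auto
        have meas: "k + (\<Sum>i<k. hcount E ((\<beta>(y0 := p)) i)) < k + (\<Sum>i<k. hcount E (\<beta> i))"
        proof -
          have "(\<Sum>i<k. hcount E ((\<beta>(y0 := p)) i)) = hcount E p + (\<Sum>i\<in>{..<k} - {y0}. hcount E (\<beta> i))"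
            using y0 by (simp add: sum.remove)
          moreover have "(\<Sum>i<k. hcount E (\<beta> i)) = hcount E v + (\<Sum>i\<in>{..<k} - {y0}. hcount E (\<beta> i))"
            using y0 v_def by (simp add: sum.remove)
          ultimately show ?thesis using hp by simp
        qed
        have pn: "p < n" using p dag unfolding is_dag_def by auto
        have inj: "inj_on (\<beta>(y0 := p)) {..<k}"
        proof (rule inj_onI)
          fix x y assume xy: "x \<in> {..<k}" "y \<in> {..<k}" "(\<beta>(y0 := p)) x = (\<beta>(y0 := p)) y"
          have pnA: "p \<notin> A" using p by auto
          show "x = y"
          proof (cases "x = y0"; cases "y = y0")
            assume "x = y0" "y \<noteq> y0" then show ?thesis using xy pnA by (auto simp: A_def)
          next
            assume "x \<noteq> y0" "y = y0" then show ?thesis using xy pnA by (auto simp: A_def)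
          next
            assume "x \<noteq> y0" "y \<noteq> y0" then show ?thesis using xy less.prems(3) by (auto dest: inj_onD)
          qed simp
        qed
        have sub: "(\<beta>(y0 := p)) ` {..<k} \<subseteq> {..<n}" using imp[OF p] less.prems(4) pn A_def by auto
        show ?thesis using less.hyps[OF meas less.prems(1,2) inj sub] imp[OF p] S_def by simp
      qed
      have "card (nps E S A) = card (Sigma ?P (\<lambda>p. nps E S (insert p (A - {v}))))"
        by (rule bij_betw_same_card[OF nps_extend[OF acyc vS vA H]])
      also have "\<dots> = (\<Sum>p\<in>?P. card (nps E S (insert p (A - {v}))))"
        by (rule card_SigmaI[OF finP]) (use A_def in \<open>auto intro!: finite_nps[OF dag]\<close>)
      finally show ?thesis using c1 IHp S_def A_def by simp
    qed
  qed
qed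

lemma keys_single_mult: "pkeys (Poly_Mapping.single m 1 * (p::rpoly)) = (\<lambda>x. m + x) ` pkeys p"
proof
  show "pkeys (Poly_Mapping.single m 1 * p) \<subseteq> (\<lambda>x. m + x) ` pkeys p"
    using keys_mult[of "Poly_Mapping.single m 1" p] by auto
  have "plookup (Poly_Mapping.single m 1 * p) (m + x) = plookup p x" for x
  proof -
    have "plookup (Poly_Mapping.single m 1 * p) (m + x) =
        plookup (Poly_Mapping.single m (1::real)) m * plookup p x"
      by (rule lookup_mult_unique) auto
    then show ?thesis by simp
  qed
  then show "(\<lambda>x. m + x) ` pkeys p \<subseteq> pkeys (Poly_Mapping.single m 1 * p)"
    by (auto simp: in_keys_iff)
qed

lemma sum_eq_1_iff_nat:
  fixes c :: "'i \<Rightarrow> nat"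
  assumes "finite I"
  shows "sum c I = 1 \<longleftrightarrow> (\<exists>i\<in>I. c i = 1 \<and> (\<forall>j\<in>I. j \<noteq> i \<longrightarrow> c j = 0))"
proof
  assume s: "sum c I = 1"
  then obtain i where i: "i \<in> I" "c i \<noteq> 0" using sum_eq_0_iff[OF assms] by (metis zero_neq_one)
  have le: "c i \<le> 1" using member_le_sum[OF i(1) _ assms, of c] s by simp
  have ci: "c i = 1" using le i by simp
  have "sum c I = c i + sum c (I - {i})" using assms i by (simp add: sum.remove)
  then have "sum c (I - {i}) = 0" using s ci by simp
  then have "\<forall>j\<in>I - {i}. c j = 0" using assms by (simp add: sum_eq_0_iff)
  then show "\<exists>i\<in>I. c i = 1 \<and> (\<forall>j\<in>I. j \<noteq> i \<longrightarrow> c j = 0)" using i ci by blast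
next
  assume "\<exists>i\<in>I. c i = 1 \<and> (\<forall>j\<in>I. j \<noteq> i \<longrightarrow> c j = 0)"
  then obtain i where i: "i \<in> I" "c i = 1" "\<forall>j\<in>I. j \<noteq> i \<longrightarrow> c j = 0" by blast
  have "sum c I = c i + sum c (I - {i})" using assms i by (simp add: sum.remove)
  moreover have "sum c (I - {i}) = 0" using i(3) by (intro sum.neutral) auto
  ultimately show "sum c I = 1" using i by simp
qed

lemma sum_eq_1_transfer:
  fixes c d :: "'i \<Rightarrow> nat"
  assumes "finite I" and "\<And>i. i \<in> I \<Longrightarrow> (c i = 0 \<longleftrightarrow> d i = 0) \<and> (c i = 1 \<longleftrightarrow> d i = 1)"
  shows "sum c I = 1 \<longleftrightarrow> sum d I = 1"
  unfolding sum_eq_1_iff_nat[OF assms(1)] using assms(2) by metis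

lemma Dt_row_scale:
  "Dt (\<lambda>u v. c u * M u v) \<alpha> \<beta> k = (\<Prod>i<k. c (\<alpha> i)) * Dt M \<alpha> \<beta> k"
  unfolding Dt_leibniz by (simp add: prod.distrib sum_distrib_left ac_simps)

definition omon :: "nat set \<Rightarrow> var \<Rightarrow>\<^sub>0 nat" where
  "omon S = (\<Sum>s\<in>S. Poly_Mapping.single (Om s) 1)"

lemma prod_Om: "finite S \<Longrightarrow> (\<Prod>s\<in>S. Var (Om s)) = Poly_Mapping.single (omon S) 1"
proof (induction S rule: finite_induct)
  case empty then show ?case by (simp add: omon_def one_poly_mapping.abs_eq single.abs_eq)
next
  case (insert x F)
  then show ?case by (simp add: omon_def Var_def mult_single)
qed

lemma lookup_omon: "finite S \<Longrightarrow> plookup (omon S) (Om t) = (if t \<in> S then 1 else 0)"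
  by (simp add: omon_def lookup_sum lookup_single when_def)

lemma prod_pick_Om:
  assumes "finite S" "card S = k"
  shows "(\<Prod>i<k. Var (Om (pick S i))) = (\<Prod>s\<in>S. Var (Om s))"
proof -
  have "(\<Prod>s\<in>S. Var (Om s)) = (\<Prod>s\<in>pick S ` {..<k}. Var (Om s))" using pick_image[OF assms(1)] assms(2) by simp
  also have "\<dots> = (\<Prod>i<k. Var (Om (pick S i)))"
    by (rule prod.reindex[unfolded o_def]) (use pick_inj[OF assms(1)] assms(2) in simp)
  finally show ?thesis by simp
qed


lemma submatrix_phi_Dt:
  assumes dag: "is_dag n E" and A: "A \<subseteq> {..<n}" and B: "B \<subseteq> {..<n}" and k: "card A = k" "card B = k"
  shows "det (submatrix (phi_Sigma n E) A B) =
    Dt (\<lambda>u v. \<Sum>s<n. (Var (Om s) * Lp E s u) * Lp E s v) (pick A) (pick B) k"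
proof -
  have dr: "dim_row (phi_Sigma n E) = n" "dim_col (phi_Sigma n E) = n"
    by (simp_all add: phi_Sigma_def Let_def mat_inverse_Lmat[OF dag] Lmat_def Omega_mat_def)
  have cA: "{i. i < n \<and> i \<in> A} = A" "{i. i < n \<and> i \<in> B} = B" using A B by auto
  have finA: "finite A" "finite B" using A B finite_subset by auto
  have pA: "pick A x < n" if "x < k" for x using pick_in_set_le[of x A] that k A by auto
  have pB: "pick B x < n" if "x < k" for x using pick_in_set_le[of x B] that k B by auto
  have "submatrix (phi_Sigma n E) A B =
      mat k k (\<lambda>(x, y). (\<lambda>u v. \<Sum>s<n. (Var (Om s) * Lp E s u) * Lp E s v) (pick A x) (pick B y))"
    unfolding submatrix_def dr cA k
    by (rule eq_matI) (auto simp: phi_Sigma_entry[OF dag pA pB] ac_simps)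
  then show ?thesis unfolding Dt_def by simp
qed

lemma det_formula:
  assumes dag: "is_dag n E" and A: "A \<subseteq> {..<n}" and B: "B \<subseteq> {..<n}" and k: "card A = k" "card B = k"
  shows "det (submatrix (phi_Sigma n E) A B) =
    (\<Sum>S\<in>{S. S \<subseteq> {..<n} \<and> card S = k}. Poly_Mapping.single (omon S) 1 *
        (Dt (Lp E) (pick S) (pick A) k * Dt (Lp E) (pick S) (pick B) k))"
proof -
  have "det (submatrix (phi_Sigma n E) A B) =
      (\<Sum>S\<in>{S. S \<subseteq> {..<n} \<and> card S = k}.
         Dt (\<lambda>s u. Var (Om s) * Lp E s u) (pick S) (pick A) k * Dt (Lp E) (pick S) (pick B) k)"
    unfolding submatrix_phi_Dt[OF assms] by (rule cauchy_binet)
  also have "\<dots> = (\<Sum>S\<in>{S. S \<subseteq> {..<n} \<and> card S = k}. Poly_Mapping.single (omon S) 1 *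
        (Dt (Lp E) (pick S) (pick A) k * Dt (Lp E) (pick S) (pick B) k))"
  proof (rule sum.cong[OF refl])
    fix S assume S: "S \<in> {S. S \<subseteq> {..<n} \<and> card S = k}"
    then have finS: "finite S" using finite_subset by auto
    have "Dt (\<lambda>s u. Var (Om s) * Lp E s u) (pick S) (pick A) k =
        (\<Prod>i<k. Var (Om (pick S i))) * Dt (Lp E) (pick S) (pick A) k"
      by (rule Dt_row_scale)
    also have "(\<Prod>i<k. Var (Om (pick S i))) = Poly_Mapping.single (omon S) 1"
      using prod_pick_Om[OF finS] prod_Om[OF finS] S by simp
    finally show "Dt (\<lambda>s u. Var (Om s) * Lp E s u) (pick S) (pick A) k * Dt (Lp E) (pick S) (pick B) k =
        Poly_Mapping.single (omon S) 1 * (Dt (Lp E) (pick S) (pick A) k * Dt (Lp E) (pick S) (pick B) k)"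
      by (simp add: ac_simps)
  qed
  finally show ?thesis .
qed

lemma card_keys_Dt_nps:
  assumes dag: "is_dag n E" and S: "S \<subseteq> {..<n}" "card S = k" and A: "A \<subseteq> {..<n}" "card A = k"
  shows "card (pkeys (Dt (Lp E) (pick S) (pick A) k)) = card (nps E S A)"
proof -
  have finS: "finite S" "finite A" using S A finite_subset by auto
  have "card (pkeys (Dt (Lp E) (pick S) (pick A) k)) = card (nps E (pick S ` {..<k}) (pick A ` {..<k}))"
    by (rule lgv_count[OF dag]) (use pick_inj[OF finS(1)] pick_inj[OF finS(2)] pick_image[OF finS(1)]
        pick_image[OF finS(2)] S A in auto)
  then show ?thesis using pick_image[OF finS(1)] pick_image[OF finS(2)] S A by simp
qed

lemma monomial_iff_count:
  assumes dag: "is_dag n E" and A: "A \<subseteq> {..<n}" and B: "B \<subseteq> {..<n}" and k: "card A = k" "card B = k"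
  shows "is_monomial (det (submatrix (phi_Sigma n E) A B)) \<longleftrightarrow>
    (\<Sum>S\<in>{S. S \<subseteq> {..<n} \<and> card S = k}. card (nps E S A) * card (nps E S B)) = 1"
proof -
  let ?SS = "{S. S \<subseteq> {..<n} \<and> card S = k}"
  let ?F = "\<lambda>S. Dt (Lp E) (pick S) (pick A) k" and ?G = "\<lambda>S. Dt (Lp E) (pick S) (pick B) k"
  let ?t = "\<lambda>S. Poly_Mapping.single (omon S) 1 * (?F S * ?G S)"
  have finSS: "finite ?SS" by (rule finite_subset[of _ "Pow {..<n}"]) auto
  have lamonly: "plookup m (Om s) = 0" if m: "m \<in> pkeys (?F S * ?G S)" for S m s
  proof -
    have g: "goodp (WA E (pick A ` {..<k}) \<union> WA E (pick B ` {..<k})) (?F S * ?G S)"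
      by (rule goodp_mult; rule goodp_mono[OF goodp_Dt_Lp]) auto
    then have "pkeys m \<subseteq> WA E (pick A ` {..<k}) \<union> WA E (pick B ` {..<k})" using m unfolding goodp_def by blast
    moreover have "Om s \<notin> WA E (pick A ` {..<k}) \<union> WA E (pick B ` {..<k})" by (auto simp: WA_def)
    ultimately show ?thesis by (auto simp: in_keys_iff)
  qed
  have disj: "pkeys (?t S) \<inter> pkeys (?t S') = {}" if SS: "S \<in> ?SS" "S' \<in> ?SS" "S \<noteq> S'" for S S'
  proof -
    have fin: "finite S" "finite S'" using SS finite_subset by auto
    obtain s where s: "(s \<in> S) \<noteq> (s \<in> S')" using SS(3) by blast
    have L1: "plookup x (Om s) = (if s \<in> S then 1 else 0)" if x: "x \<in> pkeys (?t S)" for x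
    proof -
      obtain m where m: "m \<in> pkeys (?F S * ?G S)" "x = omon S + m" using x keys_single_mult by auto
      then show ?thesis using lamonly[OF m(1)] lookup_omon[OF fin(1)] by (simp add: lookup_add)
    qed
    have L2: "plookup x (Om s) = (if s \<in> S' then 1 else 0)" if x: "x \<in> pkeys (?t S')" for x
    proof -
      obtain m where m: "m \<in> pkeys (?F S' * ?G S')" "x = omon S' + m" using x keys_single_mult by auto
      then show ?thesis using lamonly[OF m(1)] lookup_omon[OF fin(2)] by (simp add: lookup_add)
    qed
    show ?thesis
    proof (rule equals0I)
      fix x assume x: "x \<in> pkeys (?t S) \<inter> pkeys (?t S')"
      have e1: "plookup x (Om s) = (if s \<in> S then 1 else 0)" using x by (intro L1) blast
      have e2: "plookup x (Om s) = (if s \<in> S' then 1 else 0)" using x by (intro L2) blast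
      show False using e1 e2 s by (cases "s \<in> S") simp_all
    qed
  qed
  have ct: "card (pkeys (?t S)) = card (pkeys (?F S * ?G S))" for S
    unfolding keys_single_mult by (rule card_image) (simp add: inj_on_def)
  have "is_monomial (det (submatrix (phi_Sigma n E) A B)) \<longleftrightarrow> card (pkeys (sum ?t ?SS)) = 1"
    unfolding det_formula[OF assms] is_monomial_card ..
  also have "card (pkeys (sum ?t ?SS)) = (\<Sum>S\<in>?SS. card (pkeys (?F S * ?G S)))"
    using card_keys_sum_disjoint[OF finSS disj] ct by simp
  also have "(\<dots> = 1) \<longleftrightarrow> (\<Sum>S\<in>?SS. card (nps E S A) * card (nps E S B)) = 1"
  proof (rule sum_eq_1_transfer[OF finSS])
    fix S assume S: "S \<in> ?SS"
    have cF: "card (pkeys (?F S)) = card (nps E S A)" using card_keys_Dt_nps[OF dag _ _ A k(1)] S by auto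
    have cG: "card (pkeys (?G S)) = card (nps E S B)" using card_keys_Dt_nps[OF dag _ _ B k(2)] S by auto
    show "(card (pkeys (?F S * ?G S)) = 0) = (card (nps E S A) * card (nps E S B) = 0) \<and>
          (card (pkeys (?F S * ?G S)) = 1) = (card (nps E S A) * card (nps E S B) = 1)"
      using card_keys_mult[of "?F S" "?G S"] cF cG by simp
  qed
  finally show ?thesis .
qed

definition tsel :: "(nat list \<times> nat list) set \<Rightarrow> nat \<Rightarrow> nat list \<times> nat list" where
  "tsel T a = (THE t. t \<in> T \<and> left_node t = a)"

definition tser :: "(nat list \<times> nat list) set \<Rightarrow> nat \<Rightarrow> nat list \<times> nat list" where
  "tser T b = (THE t. t \<in> T \<and> right_node t = b)"

definition tPhi :: "nat set \<Rightarrow> nat set \<Rightarrow> (nat list \<times> nat list) set \<Rightarrow>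
    nat set \<times> (nat \<Rightarrow> nat list) \<times> (nat \<Rightarrow> nat list)" where
  "tPhi A B T = ((\<lambda>t. hd (fst t)) ` T, restrict (\<lambda>a. fst (tsel T a)) A, restrict (\<lambda>b. snd (tser T b)) B)"

definition tPsi :: "nat set \<Rightarrow> nat set \<Rightarrow> nat set \<times> (nat \<Rightarrow> nat list) \<times> (nat \<Rightarrow> nat list) \<Rightarrow>
    (nat list \<times> nat list) set" where
  "tPsi A B x = {(fst (snd x) a, snd (snd x) b) | a b. a \<in> A \<and> b \<in> B \<and> hd (fst (snd x) a) = hd (snd (snd x) b)}"

definition validT :: "(nat \<times> nat) set \<Rightarrow> nat set \<Rightarrow> nat set \<Rightarrow> (nat list \<times> nat list) set \<Rightarrow> bool" where
  "validT E A B T \<longleftrightarrow> trek_system E A B T \<and> no_sided_intersection T"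

lemma dpath_hd_lt:
  assumes "E \<subseteq> {..<n} \<times> {..<n}" "dpath E p" "last p < n" shows "hd p < n"
proof (cases "length p = 1")
  case True
  then obtain x where "p = [x]" by (metis One_nat_def length_0_conv length_Suc_conv)
  then show ?thesis using assms by simp
next
  case False
  then have "1 < length p" using assms(2) by (cases p) (auto simp: dpath_def)
  then have "(p ! 0, p ! 1) \<in> E" using assms(2) unfolding dpath_def by (metis One_nat_def)
  then show ?thesis using assms(1,2) by (auto simp: hd_conv_nth dpath_def)
qed

lemma validT_props:
  assumes v: "validT E A B T" and cAB: "card A = card B"
  shows "finite T" "card T = card A" "\<And>t. t \<in> T \<Longrightarrow> is_trek E t" "left_node ` T = A" "right_node ` T = B"
    "inj_on left_node T" "inj_on right_node T" "inj_on (\<lambda>t. hd (fst t)) T"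
    "\<And>a. a \<in> A \<Longrightarrow> tsel T a \<in> T \<and> left_node (tsel T a) = a"
    "\<And>b. b \<in> B \<Longrightarrow> tser T b \<in> T \<and> right_node (tser T b) = b"
    "\<And>t. t \<in> T \<Longrightarrow> tsel T (left_node t) = t" "\<And>t. t \<in> T \<Longrightarrow> tser T (right_node t) = t"
    "\<And>t t'. t \<in> T \<Longrightarrow> t' \<in> T \<Longrightarrow> t \<noteq> t' \<Longrightarrow> set (fst t) \<inter> set (fst t') = {} \<and> set (snd t) \<inter> set (snd t') = {}"
proof -
  have ts: "trek_system E A B T" and nsi: "no_sided_intersection T" using v by (auto simp: validT_def)
  show fin: "finite T" and cT: "card T = card A" and tr: "\<And>t. t \<in> T \<Longrightarrow> is_trek E t"
    and ln: "left_node ` T = A" and rn: "right_node ` T = B"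
    using ts by (auto simp: trek_system_def)
  show il: "inj_on left_node T" using ln cT fin by (intro eq_card_imp_inj_on) auto
  show ir: "inj_on right_node T" using rn cT cAB fin by (intro eq_card_imp_inj_on) auto
  show disj: "\<And>t t'. t \<in> T \<Longrightarrow> t' \<in> T \<Longrightarrow> t \<noteq> t' \<Longrightarrow> set (fst t) \<inter> set (fst t') = {} \<and> set (snd t) \<inter> set (snd t') = {}"
    using nsi by (auto simp: no_sided_intersection_def)
  show "inj_on (\<lambda>t. hd (fst t)) T"
  proof (rule inj_onI)
    fix t t' assume tt: "t \<in> T" "t' \<in> T" "hd (fst t) = hd (fst t')"
    show "t = t'"
    proof (rule ccontr)
      assume ne: "t \<noteq> t'"
      have "fst t \<noteq> []" "fst t' \<noteq> []" using tr[OF tt(1)] tr[OF tt(2)] by (auto simp: is_trek_def dpath_def)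
      then have "hd (fst t) \<in> set (fst t) \<inter> set (fst t')" using tt(3) by (metis IntI list.set_sel(1))
      then show False using disj[OF tt(1,2) ne] by auto
    qed
  qed
  show sel: "\<And>a. a \<in> A \<Longrightarrow> tsel T a \<in> T \<and> left_node (tsel T a) = a"
  proof -
    fix a assume "a \<in> A"
    then obtain t where t: "t \<in> T" "left_node t = a" using ln by auto
    have "\<exists>!t. t \<in> T \<and> left_node t = a" using t il by (auto dest: inj_onD)
    then show "tsel T a \<in> T \<and> left_node (tsel T a) = a" unfolding tsel_def by (rule theI')
  qed
  show "\<And>b. b \<in> B \<Longrightarrow> tser T b \<in> T \<and> right_node (tser T b) = b"
  proof -
    fix b assume "b \<in> B"
    then obtain t where t: "t \<in> T" "right_node t = b" using rn by auto
    have "\<exists>!t. t \<in> T \<and> right_node t = b" using t ir by (auto dest: inj_onD)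
    then show "tser T b \<in> T \<and> right_node (tser T b) = b" unfolding tser_def by (rule theI')
  qed
  show "\<And>t. t \<in> T \<Longrightarrow> tsel T (left_node t) = t"
    unfolding tsel_def by (rule the_equality) (use il in \<open>auto dest: inj_onD\<close>)
  show "\<And>t. t \<in> T \<Longrightarrow> tser T (right_node t) = t"
    unfolding tser_def by (rule the_equality) (use ir in \<open>auto dest: inj_onD\<close>)
qed


lemma tPhi_in:
  assumes dag: "is_dag n E" and A: "A \<subseteq> {..<n}" and cAB: "card A = card B" and v: "validT E A B T"
  shows "tPhi A B T \<in> Sigma {S. S \<subseteq> {..<n} \<and> card S = card A} (\<lambda>S. nps E S A \<times> nps E S B)"
proof -
  note V = validT_props[OF v cAB]
  let ?S = "(\<lambda>t. hd (fst t)) ` T"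
  have Esub: "E \<subseteq> {..<n} \<times> {..<n}" using dag by (simp add: is_dag_def)
  have Sn: "?S \<subseteq> {..<n}"
  proof
    fix x assume "x \<in> ?S"
    then obtain t where t: "t \<in> T" "x = hd (fst t)" by auto
    have "last (fst t) \<in> A" using V(4) t(1) by (auto simp: left_node_def)
    then show "x \<in> {..<n}" using dpath_hd_lt[OF Esub, of "fst t"] V(3)[OF t(1)] A t(2)
      by (auto simp: is_trek_def)
  qed
  have cS: "card ?S = card A" using card_image[OF V(8)] V(2) by simp
  have TA: "tsel T ` A = T"
  proof
    show "tsel T ` A \<subseteq> T" using V(9) by auto
    show "T \<subseteq> tsel T ` A"
    proof
      fix t assume t: "t \<in> T"
      then have "t = tsel T (left_node t)" using V(11) by simp
      moreover have "left_node t \<in> A" using t V(4) by auto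
      ultimately show "t \<in> tsel T ` A" by blast
    qed
  qed
  have TB: "tser T ` B = T"
  proof
    show "tser T ` B \<subseteq> T" using V(10) by auto
    show "T \<subseteq> tser T ` B"
    proof
      fix t assume t: "t \<in> T"
      then have "t = tser T (right_node t)" using V(12) by simp
      moreover have "right_node t \<in> B" using t V(5) by auto
      ultimately show "t \<in> tser T ` B" by blast
    qed
  qed
  have s1: "restrict (\<lambda>a. fst (tsel T a)) A \<in> nps E ?S A"
  proof (rule nps_I)
    show "restrict (\<lambda>a. fst (tsel T a)) A \<in> extensional A" by simp
    show "dpath E (restrict (\<lambda>a. fst (tsel T a)) A a)" "last (restrict (\<lambda>a. fst (tsel T a)) A a) = a"
      if a: "a \<in> A" for a
      using V(9)[OF a] V(3)[of "tsel T a"] a by (auto simp: is_trek_def left_node_def)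
    show "(\<lambda>a. hd (restrict (\<lambda>a. fst (tsel T a)) A a)) ` A = ?S"
    proof -
      have "(\<lambda>a. hd (restrict (\<lambda>a. fst (tsel T a)) A a)) ` A = (\<lambda>t. hd (fst t)) ` (tsel T ` A)"
        by (auto simp: image_iff)
      then show ?thesis using TA by simp
    qed
    show "set (restrict (\<lambda>a. fst (tsel T a)) A a) \<inter> set (restrict (\<lambda>a. fst (tsel T a)) A b) = {}"
      if ab: "a \<in> A" "b \<in> A" "a \<noteq> b" for a b
    proof -
      have "tsel T a \<noteq> tsel T b" using V(9)[OF ab(1)] V(9)[OF ab(2)] ab(3) by metis
      then show ?thesis using V(13)[OF conjunct1[OF V(9)[OF ab(1)]] conjunct1[OF V(9)[OF ab(2)]]] ab by auto
    qed
  qed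
  have s2: "restrict (\<lambda>b. snd (tser T b)) B \<in> nps E ?S B"
  proof (rule nps_I)
    show "restrict (\<lambda>b. snd (tser T b)) B \<in> extensional B" by simp
    show "dpath E (restrict (\<lambda>b. snd (tser T b)) B a)" "last (restrict (\<lambda>b. snd (tser T b)) B a) = a"
      if a: "a \<in> B" for a
      using V(10)[OF a] V(3)[of "tser T a"] a by (auto simp: is_trek_def right_node_def)
    show "(\<lambda>a. hd (restrict (\<lambda>b. snd (tser T b)) B a)) ` B = ?S"
    proof -
      have "(\<lambda>a. hd (restrict (\<lambda>b. snd (tser T b)) B a)) ` B = (\<lambda>t. hd (snd t)) ` (tser T ` B)"
        by (auto simp: image_iff)
      also have "\<dots> = (\<lambda>t. hd (snd t)) ` T" using TB by simp
      also have "\<dots> = ?S" using V(3) by (auto simp: is_trek_def image_iff)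
      finally show ?thesis .
    qed
    show "set (restrict (\<lambda>b. snd (tser T b)) B a) \<inter> set (restrict (\<lambda>b. snd (tser T b)) B b) = {}"
      if ab: "a \<in> B" "b \<in> B" "a \<noteq> b" for a b
    proof -
      have "tser T a \<noteq> tser T b" using V(10)[OF ab(1)] V(10)[OF ab(2)] ab(3) by metis
      then show ?thesis using V(13)[OF conjunct1[OF V(10)[OF ab(1)]] conjunct1[OF V(10)[OF ab(2)]]] ab by auto
    qed
  qed
  show ?thesis unfolding tPhi_def using Sn cS s1 s2 by simp
qed


lemma nps_hd_inj:
  assumes s: "\<sigma> \<in> nps E S A" shows "inj_on (\<lambda>a. hd (\<sigma> a)) A"
proof (rule inj_onI)
  fix a b assume ab: "a \<in> A" "b \<in> A" "hd (\<sigma> a) = hd (\<sigma> b)"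
  show "a = b"
  proof (rule ccontr)
    assume ne: "a \<noteq> b"
    have "\<sigma> a \<noteq> []" "\<sigma> b \<noteq> []" using nps_D(2)[OF s] ab dpath_ne by auto
    then have "hd (\<sigma> a) \<in> set (\<sigma> a) \<inter> set (\<sigma> b)" using ab(3) by (metis IntI list.set_sel(1))
    then show False using nps_D(5)[OF s ab(1,2) ne] by auto
  qed
qed

lemma tPsi_mem: "t \<in> tPsi A B (S, \<sigma>, \<tau>) \<longleftrightarrow> (\<exists>a\<in>A. \<exists>b\<in>B. t = (\<sigma> a, \<tau> b) \<and> hd (\<sigma> a) = hd (\<tau> b))"
  unfolding tPsi_def by auto

lemma tPsi_valid:
  assumes s: "\<sigma> \<in> nps E S A" and t: "\<tau> \<in> nps E S B" and fA: "finite A" and fB: "finite B"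
  shows "validT E A B (tPsi A B (S, \<sigma>, \<tau>))"
proof -
  let ?T = "tPsi A B (S, \<sigma>, \<tau>)"
  note iS = nps_hd_inj[OF s] and iT = nps_hd_inj[OF t]
  have mem: "\<And>x. x \<in> ?T \<longleftrightarrow> (\<exists>a\<in>A. \<exists>b\<in>B. x = (\<sigma> a, \<tau> b) \<and> hd (\<sigma> a) = hd (\<tau> b))"
    by (rule tPsi_mem)
  have uniq: "a = a' \<and> b = b'" if "a \<in> A" "a' \<in> A" "b \<in> B" "b' \<in> B" "hd (\<sigma> a) = hd (\<tau> b)"
    "hd (\<sigma> a') = hd (\<tau> b')" "a = a' \<or> b = b'" for a a' b b'
    using that iS iT by (metis inj_onD)
  have fin: "finite ?T"
  proof -
    have "?T \<subseteq> (\<lambda>(a, b). (\<sigma> a, \<tau> b)) ` (A \<times> B)" using mem by fastforce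
    then show ?thesis using fA fB by (rule finite_subset[OF _ finite_imageI[OF finite_cartesian_product]])
  qed
  have ln: "left_node ` ?T = A"
  proof
    show "left_node ` ?T \<subseteq> A" using mem nps_D(3)[OF s] by (auto simp: left_node_def)
    show "A \<subseteq> left_node ` ?T"
    proof
      fix a assume a: "a \<in> A"
      then have "hd (\<sigma> a) \<in> S" using nps_D(4)[OF s] by auto
      then obtain b where b: "b \<in> B" "hd (\<tau> b) = hd (\<sigma> a)" using nps_D(4)[OF t] by auto
      then have "(\<sigma> a, \<tau> b) \<in> ?T" unfolding mem using a by (metis (no_types, lifting))
      moreover have "left_node (\<sigma> a, \<tau> b) = a" using nps_D(3)[OF s a] by (simp add: left_node_def)
      ultimately show "a \<in> left_node ` ?T" by force
    qed
  qed
  have rn: "right_node ` ?T = B"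
  proof
    show "right_node ` ?T \<subseteq> B" using mem nps_D(3)[OF t] by (auto simp: right_node_def)
    show "B \<subseteq> right_node ` ?T"
    proof
      fix b assume b: "b \<in> B"
      then have "hd (\<tau> b) \<in> S" using nps_D(4)[OF t] by auto
      then obtain a where a: "a \<in> A" "hd (\<sigma> a) = hd (\<tau> b)" using nps_D(4)[OF s] by force
      then have "(\<sigma> a, \<tau> b) \<in> ?T" unfolding mem using b by (metis (no_types, lifting))
      moreover have "right_node (\<sigma> a, \<tau> b) = b" using nps_D(3)[OF t b] by (simp add: right_node_def)
      ultimately show "b \<in> right_node ` ?T" by force
    qed
  qed
  have il: "inj_on left_node ?T"
  proof (rule inj_onI)
    fix x y assume xy: "x \<in> ?T" "y \<in> ?T" "left_node x = left_node y"
    have "\<exists>a\<in>A. \<exists>b\<in>B. x = (\<sigma> a, \<tau> b) \<and> hd (\<sigma> a) = hd (\<tau> b)" using xy(1) mem[of x] by simp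
    then obtain a b where ab: "a \<in> A" "b \<in> B" "x = (\<sigma> a, \<tau> b)" "hd (\<sigma> a) = hd (\<tau> b)" by blast
    have "\<exists>a\<in>A. \<exists>b\<in>B. y = (\<sigma> a, \<tau> b) \<and> hd (\<sigma> a) = hd (\<tau> b)" using xy(2) mem[of y] by simp
    then obtain a' b' where ab': "a' \<in> A" "b' \<in> B" "y = (\<sigma> a', \<tau> b')" "hd (\<sigma> a') = hd (\<tau> b')" by blast
    have l1: "left_node x = last (\<sigma> a)" using ab(3) by (simp add: left_node_def)
    have l2: "left_node y = last (\<sigma> a')" using ab'(3) by (simp add: left_node_def)
    have "a = last (\<sigma> a)" using nps_D(3)[OF s ab(1)] by simp
    also have "\<dots> = left_node x" using l1 by simp
    also have "\<dots> = left_node y" by (rule xy(3))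
    also have "\<dots> = last (\<sigma> a')" by (rule l2)
    also have "\<dots> = a'" using nps_D(3)[OF s ab'(1)] by simp
    finally have aa: "a = a'" .
    have "b = b'" using uniq[OF ab(1) ab'(1) ab(2) ab'(2) ab(4) ab'(4)] aa by blast
    then show "x = y" using ab(3) ab'(3) aa by simp
  qed
  have cT: "card ?T = card A" using card_image[OF il] ln by simp
  have tr: "is_trek E x" if x: "x \<in> ?T" for x
    using x mem nps_D(2)[OF s] nps_D(2)[OF t] by (auto simp: is_trek_def)
  have nsi: "no_sided_intersection ?T"
    unfolding no_sided_intersection_def
  proof (intro ballI impI)
    fix x y assume xy: "x \<in> ?T" "y \<in> ?T" "x \<noteq> y"
    have "\<exists>a\<in>A. \<exists>b\<in>B. x = (\<sigma> a, \<tau> b) \<and> hd (\<sigma> a) = hd (\<tau> b)" using xy(1) mem[of x] by simp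
    then obtain a b where ab: "a \<in> A" "b \<in> B" "x = (\<sigma> a, \<tau> b)" "hd (\<sigma> a) = hd (\<tau> b)" by blast
    have "\<exists>a\<in>A. \<exists>b\<in>B. y = (\<sigma> a, \<tau> b) \<and> hd (\<sigma> a) = hd (\<tau> b)" using xy(2) mem[of y] by simp
    then obtain a' b' where ab': "a' \<in> A" "b' \<in> B" "y = (\<sigma> a', \<tau> b')" "hd (\<sigma> a') = hd (\<tau> b')" by blast
    note u = uniq[OF ab(1) ab'(1) ab(2) ab'(2) ab(4) ab'(4)]
    have ne1: "a \<noteq> a'"
    proof
      assume aa: "a = a'" then have "b = b'" using u by blast
      then show False using xy(3) ab(3) ab'(3) aa by simp
    qed
    have ne2: "b \<noteq> b'"
    proof
      assume bb: "b = b'" then have "a = a'" using u by blast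
      then show False using xy(3) ab(3) ab'(3) bb by simp
    qed
    from ne1 ne2 show "set (fst x) \<inter> set (fst y) = {} \<and> set (snd x) \<inter> set (snd y) = {}"
      using nps_D(5)[OF s ab(1) ab'(1)] nps_D(5)[OF t ab(2) ab'(2)] ab ab' by auto
  qed
  show ?thesis unfolding validT_def trek_system_def using fin cT tr ln rn nsi by auto
qed

lemma tPsi_tPhi:
  assumes v: "validT E A B T" and cAB: "card A = card B"
  shows "tPsi A B (tPhi A B T) = T"
proof
  note V = validT_props[OF v cAB]
  show "tPsi A B (tPhi A B T) \<subseteq> T"
  proof
    fix x assume "x \<in> tPsi A B (tPhi A B T)"
    then obtain a b where ab: "a \<in> A" "b \<in> B" "x = (fst (tsel T a), snd (tser T b))"
      "hd (fst (tsel T a)) = hd (snd (tser T b))"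
      by (auto simp: tPhi_def tPsi_def)
    have "hd (snd (tser T b)) = hd (fst (tser T b))" using V(3) V(10)[OF ab(2)] by (auto simp: is_trek_def)
    then have "tsel T a = tser T b" using V(8) V(9)[OF ab(1)] V(10)[OF ab(2)] ab(4) by (metis inj_onD)
    then have "x = tsel T a" using ab(3) by simp
    then show "x \<in> T" using V(9)[OF ab(1)] by simp
  qed
  show "T \<subseteq> tPsi A B (tPhi A B T)"
  proof
    fix t assume t: "t \<in> T"
    have a: "left_node t \<in> A" and b: "right_node t \<in> B" using t V(4,5) by auto
    have "hd (fst t) = hd (snd t)" using V(3)[OF t] by (simp add: is_trek_def)
    note hdeq = this
    have e1: "restrict (\<lambda>a. fst (tsel T a)) A (left_node t) = fst t" using a V(11)[OF t] by simp
    have e2: "restrict (\<lambda>b. snd (tser T b)) B (right_node t) = snd t" using b V(12)[OF t] by simp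
    show "t \<in> tPsi A B (tPhi A B T)"
      unfolding tPhi_def tPsi_mem
    proof (rule bexI[OF bexI[OF _ b] a])
      show "t = (restrict (\<lambda>a. fst (tsel T a)) A (left_node t), restrict (\<lambda>b. snd (tser T b)) B (right_node t)) \<and>
        hd (restrict (\<lambda>a. fst (tsel T a)) A (left_node t)) = hd (restrict (\<lambda>b. snd (tser T b)) B (right_node t))"
        unfolding e1 e2 using hdeq by simp
    qed
  qed
qed

lemma tPhi_tPsi:
  assumes s: "\<sigma> \<in> nps E S A" and t: "\<tau> \<in> nps E S B" and fA: "finite A" and fB: "finite B"
    and cAB: "card A = card B"
  shows "tPhi A B (tPsi A B (S, \<sigma>, \<tau>)) = (S, \<sigma>, \<tau>)"
proof -
  let ?T = "tPsi A B (S, \<sigma>, \<tau>)"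
  have v: "validT E A B ?T" by (rule tPsi_valid[OF s t fA fB])
  note V = validT_props[OF v cAB]
  note mem = tPsi_mem[of _ A B S \<sigma> \<tau>]
  have S: "(\<lambda>x. hd (fst x)) ` ?T = S"
  proof
    show "(\<lambda>x. hd (fst x)) ` ?T \<subseteq> S" using mem nps_D(4)[OF s] by auto
    show "S \<subseteq> (\<lambda>x. hd (fst x)) ` ?T"
    proof
      fix x assume "x \<in> S"
      then obtain a where a: "a \<in> A" "x = hd (\<sigma> a)" using nps_D(4)[OF s] by auto
      then have "a \<in> left_node ` ?T" using V(4) by simp
      then obtain t where "t \<in> ?T" "left_node t = a" by (auto simp del: tPsi_mem)
      then obtain a' b' where "a' \<in> A" "t = (\<sigma> a', \<tau> b')" "last (\<sigma> a') = a"
        using mem by (auto simp: left_node_def)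
      then have "t = (\<sigma> a, \<tau> b')" using nps_D(3)[OF s] by auto
      then show "x \<in> (\<lambda>x. hd (fst x)) ` ?T" using a \<open>t \<in> ?T\<close> by force
    qed
  qed
  have sig: "restrict (\<lambda>a. fst (tsel ?T a)) A = \<sigma>"
  proof
    fix a show "restrict (\<lambda>a. fst (tsel ?T a)) A a = \<sigma> a"
    proof (cases "a \<in> A")
      case True
      obtain a' b' where "a' \<in> A" "tsel ?T a = (\<sigma> a', \<tau> b')" using V(9)[OF True] mem by blast
      moreover have "left_node (tsel ?T a) = a" using V(9)[OF True] by simp
      ultimately have "tsel ?T a = (\<sigma> a, \<tau> b')" using nps_D(3)[OF s] by (auto simp: left_node_def)
      then show ?thesis using True by simp
    next
      case False then show ?thesis using nps_D(1)[OF s] by (simp add: extensional_def)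
    qed
  qed
  have tau: "restrict (\<lambda>b. snd (tser ?T b)) B = \<tau>"
  proof
    fix b show "restrict (\<lambda>b. snd (tser ?T b)) B b = \<tau> b"
    proof (cases "b \<in> B")
      case True
      obtain a' b' where "b' \<in> B" "tser ?T b = (\<sigma> a', \<tau> b')" using V(10)[OF True] mem by blast
      moreover have "right_node (tser ?T b) = b" using V(10)[OF True] by simp
      ultimately have "tser ?T b = (\<sigma> a', \<tau> b)" using nps_D(3)[OF t] by (auto simp: right_node_def)
      then show ?thesis using True by simp
    next
      case False then show ?thesis using nps_D(1)[OF t] by (simp add: extensional_def)
    qed
  qed
  show ?thesis unfolding tPhi_def using S sig tau by simp
qed

lemma trek_count:
  assumes dag: "is_dag n E" and A: "A \<subseteq> {..<n}" and B: "B \<subseteq> {..<n}" and cAB: "card A = card B"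
  shows "finite {T. validT E A B T}"
    "card {T. validT E A B T} = (\<Sum>S\<in>{S. S \<subseteq> {..<n} \<and> card S = card A}. card (nps E S A) * card (nps E S B))"
proof -
  let ?SS = "{S. S \<subseteq> {..<n} \<and> card S = card A}"
  let ?X = "Sigma ?SS (\<lambda>S. nps E S A \<times> nps E S B)"
  have fA: "finite A" "finite B" using A B finite_subset by auto
  have finSS: "finite ?SS" by (rule finite_subset[of _ "Pow {..<n}"]) auto
  have bij: "bij_betw (tPhi A B) {T. validT E A B T} ?X"
  proof (rule bij_betw_byWitness[where f' = "tPsi A B"])
    show "\<forall>T\<in>{T. validT E A B T}. tPsi A B (tPhi A B T) = T" using tPsi_tPhi cAB by blast
    show "\<forall>x\<in>?X. tPhi A B (tPsi A B x) = x"
    proof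
      fix x assume "x \<in> ?X"
      then obtain S \<sigma> \<tau> where x: "x = (S, \<sigma>, \<tau>)" "\<sigma> \<in> nps E S A" "\<tau> \<in> nps E S B" by auto
      show "tPhi A B (tPsi A B x) = x" unfolding x(1) by (rule tPhi_tPsi[OF x(2,3) fA cAB])
    qed
    show "tPhi A B ` {T. validT E A B T} \<subseteq> ?X"
    proof
      fix x assume "x \<in> tPhi A B ` {T. validT E A B T}"
      then obtain T where "validT E A B T" "x = tPhi A B T" by blast
      then show "x \<in> ?X" using tPhi_in[OF dag A cAB] by simp
    qed
    show "tPsi A B ` ?X \<subseteq> {T. validT E A B T}"
    proof
      fix T assume "T \<in> tPsi A B ` ?X"
      then obtain S \<sigma> \<tau> where T: "T = tPsi A B (S, \<sigma>, \<tau>)" "\<sigma> \<in> nps E S A" "\<tau> \<in> nps E S B" by auto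
      show "T \<in> {T. validT E A B T}" using tPsi_valid[OF T(2,3) fA] T(1) by simp
    qed
  qed
  have finX: "finite ?X" using finSS finite_nps[OF dag fA(1)] finite_nps[OF dag fA(2)] by auto
  show "finite {T. validT E A B T}" using bij_betw_finite[OF bij] finX by simp
  have "card {T. validT E A B T} = card ?X" by (rule bij_betw_same_card[OF bij])
  also have "\<dots> = (\<Sum>S\<in>?SS. card (nps E S A \<times> nps E S B))"
    by (rule card_SigmaI[OF finSS]) (use finite_nps[OF dag fA(1)] finite_nps[OF dag fA(2)] in auto)
  also have "\<dots> = (\<Sum>S\<in>?SS. card (nps E S A) * card (nps E S B))" by (simp add: card_cartesian_product)
  finally show "card {T. validT E A B T} = (\<Sum>S\<in>?SS. card (nps E S A) * card (nps E S B))" .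
qed

theorem corollary4p5:
  fixes n :: nat and E :: "(nat \<times> nat) set" and i j :: nat and K :: "nat set"
  assumes "is_dag n E"
    and "i < n" and "j < n" and "i \<noteq> j"
    and "K \<subseteq> {..<n} - {i, j}"
    and "\<not> d_separates E K i j"
  shows "is_monomial (det (submatrix (phi_Sigma n E) ({i} \<union> K) ({j} \<union> K)))
         \<longleftrightarrow> (\<exists>!T. trek_system E ({i} \<union> K) ({j} \<union> K) T \<and> no_sided_intersection T)"
proof -
  let ?A = "{i} \<union> K" and ?B = "{j} \<union> K"
  have A: "?A \<subseteq> {..<n}" and B: "?B \<subseteq> {..<n}" using assms(2,3,5) by auto
  have finK: "finite K" using assms(5) finite_subset by blast
  have iK: "i \<notin> K" and jK: "j \<notin> K" using assms(5) by auto
  have cA: "card ?A = Suc (card K)" using iK finK by simp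
  have cB: "card ?B = Suc (card K)" using jK finK by simp
  have cAB: "card ?A = card ?B" using cA cB by simp
  have "is_monomial (det (submatrix (phi_Sigma n E) ?A ?B)) \<longleftrightarrow>
      (\<Sum>S\<in>{S. S \<subseteq> {..<n} \<and> card S = card ?A}. card (nps E S ?A) * card (nps E S ?B)) = 1"
    by (rule monomial_iff_count[OF assms(1) A B refl cAB[symmetric]])
  also have "\<dots> \<longleftrightarrow> card {T. validT E ?A ?B T} = 1"
    using trek_count(2)[OF assms(1) A B cAB] by simp
  also have "\<dots> \<longleftrightarrow> (\<exists>!T. validT E ?A ?B T)"
  proof
    assume "card {T. validT E ?A ?B T} = 1"
    then obtain T0 where "{T. validT E ?A ?B T} = {T0}" by (rule card_1_singletonE)
    then show "\<exists>!T. validT E ?A ?B T" by (metis mem_Collect_eq singletonD singletonI)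
  next
    assume "\<exists>!T. validT E ?A ?B T"
    then obtain T0 where "validT E ?A ?B T0" "\<And>T. validT E ?A ?B T \<Longrightarrow> T = T0" by blast
    then have "{T. validT E ?A ?B T} = {T0}" by blast
    then show "card {T. validT E ?A ?B T} = 1" by simp
  qed
  finally show ?thesis by (simp add: validT_def)
qed

end
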